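(* Let $\mathfrak{g}$ be a complex semisimple Lie algebra, $\mathfrak{h}\subset\mathfrak{g}$ a Cartan subalgebra, and $e,h,f$ a principal $\mathfrak{sl}_2$-triple in $\mathfrak{g}$ with $h\in\mathfrak{h}$. Then the Poisson centralizer of $h[-1]$ in $S(\mathfrak{g}_-)$ is $S(\mathfrak{h}_-)$.
   Context: $\mathfrak{g}_-=\mathfrak{g}\otimes t^{-1}\mathbb{C}[t^{-1}]$, $\mathfrak{h}_-=\mathfrak{h}\otimes t^{-1}\mathbb{C}[t^{-1}]\subset\mathfrak{g}_-$, and $x[-m]=x\otimes t^{-m}$. $S(\mathfrak{g}_-)$ carries the Poisson bracket extending the Lie bracket of $\mathfrak{g}_-$ (i.e. $\{x,y\}=[x,y]$ for $x,y\in\mathfrak{g}_-$); the Poisson centralizer of $u$ is $\{a\in S(\mathfrak{g}_-):\{u,a\}=0\}$. *)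

theory Defs
  imports Complex_Main "HOL-Library.Function_Algebras" "HOL-Library.Poly_Mapping"
begin

definition cscale :: "complex \<Rightarrow> ('n \<Rightarrow> complex) \<Rightarrow> ('n \<Rightarrow> complex)" where
  "cscale c x = (\<lambda>i. c * x i)"

abbreviation cspan :: "('n \<Rightarrow> complex) set \<Rightarrow> ('n \<Rightarrow> complex) set" where
  "cspan \<equiv> module.span cscale"

abbreviation csubspace :: "('n \<Rightarrow> complex) set \<Rightarrow> bool" where
  "csubspace \<equiv> module.subspace cscale"

abbreviation cdim :: "('n \<Rightarrow> complex) set \<Rightarrow> nat" where
  "cdim \<equiv> vector_space.dim cscale"

definition lie_algebra :: "(('n::finite \<Rightarrow> complex) \<Rightarrow> ('n \<Rightarrow> complex) \<Rightarrow> ('n \<Rightarrow> complex)) \<Rightarrow> bool" where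
  "lie_algebra br \<longleftrightarrow>
     (\<forall>x y z. br (x + y) z = br x z + br y z) \<and>
     (\<forall>c x z. br (cscale c x) z = cscale c (br x z)) \<and>
     (\<forall>x y z. br x (y + z) = br x y + br x z) \<and>
     (\<forall>c x z. br x (cscale c z) = cscale c (br x z)) \<and>
     (\<forall>x. br x x = 0) \<and>
     (\<forall>x y z. br x (br y z) + br y (br z x) + br z (br x y) = 0)"

definition lie_subalgebra where
  "lie_subalgebra br S \<longleftrightarrow> csubspace S \<and> (\<forall>x\<in>S. \<forall>y\<in>S. br x y \<in> S)"

definition lie_ideal where
  "lie_ideal br I \<longleftrightarrow> csubspace I \<and> (\<forall>x y. y \<in> I \<longrightarrow> br x y \<in> I)"

fun derived_series where
  "derived_series br S 0 = S"
| "derived_series br S (Suc k) =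
     cspan {br a b | a b. a \<in> derived_series br S k \<and> b \<in> derived_series br S k}"

definition solvable where
  "solvable br S \<longleftrightarrow> (\<exists>k. derived_series br S k = {0})"

definition semisimple where
  "semisimple br \<longleftrightarrow> lie_algebra br \<and> (\<forall>I. lie_ideal br I \<and> solvable br I \<longrightarrow> I = {0})"

definition nilpotent_sub where
  "nilpotent_sub br H \<longleftrightarrow>
     (\<exists>k. \<forall>xs y. set xs \<subseteq> H \<and> length xs = k \<and> y \<in> H \<longrightarrow> foldr br xs y = 0)"

definition normalizer where
  "normalizer br H = {x. \<forall>y\<in>H. br x y \<in> H}"

definition cartan_subalgebra where
  "cartan_subalgebra br H \<longleftrightarrow> lie_subalgebra br H \<and> nilpotent_sub br H \<and> normalizer br H = H"

definition centralizer where
  "centralizer br x = {y. br x y = 0}"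

definition sl2_triple where
  "sl2_triple br e h f \<longleftrightarrow>
     br h e = cscale 2 e \<and> br h f = cscale (-2) f \<and> br e f = h \<and> e \<noteq> 0"

text \<open>Principal sl2-triple: e is a principal (= regular) nilpotent, i.e. its centralizer has
  dimension equal to the rank (the dimension of a Cartan subalgebra).\<close>
definition principal_sl2_triple where
  "principal_sl2_triple br H e h f \<longleftrightarrow>
     sl2_triple br e h f \<and> cdim (centralizer br e) = cdim H"

text \<open>Variable (i,k) stands for b_i[-(k+1)] = b_i \<otimes> t^(-(k+1)), where b_i is the i-th
  coordinate basis vector of g. Polynomials in these variables form S(g_-).\<close>
type_synonym 'n Spoly = "(('n \<times> nat) \<Rightarrow>\<^sub>0 nat) \<Rightarrow>\<^sub>0 complex"

definition basisv :: "'n \<Rightarrow> ('n \<Rightarrow> complex)" where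
  "basisv i = (\<lambda>j. if j = i then 1 else 0)"

text \<open>x[-(k+1)] as a linear element of S(g_-).\<close>
definition loopv :: "('n::finite \<Rightarrow> complex) \<Rightarrow> nat \<Rightarrow> 'n Spoly" where
  "loopv x k = (\<Sum>i\<in>UNIV. Poly_Mapping.single (Poly_Mapping.single (i, k) 1) (x i))"

definition vars :: "'n Spoly \<Rightarrow> ('n \<times> nat) set" where
  "vars P = \<Union> (Poly_Mapping.keys ` Poly_Mapping.keys P)"

definition pderiv_var :: "('n \<times> nat) \<Rightarrow> 'n Spoly \<Rightarrow> 'n Spoly" where
  "pderiv_var v P = (\<Sum>\<mu>\<in>Poly_Mapping.keys P.
      Poly_Mapping.single (\<mu> - Poly_Mapping.single v 1)
        (of_nat (Poly_Mapping.lookup \<mu> v) * Poly_Mapping.lookup P \<mu>))"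

text \<open>The Poisson bracket on S(g_-) extending the Lie bracket of g_-:
  {P,Q} = sum_{a,b} dP/dX_a dQ/dX_b [X_a, X_b], with
  [b_i[-(k+1)], b_j[-(l+1)]] = [b_i,b_j][-(k+l+2)].\<close>
definition poisson :: "(('n::finite \<Rightarrow> complex) \<Rightarrow> ('n \<Rightarrow> complex) \<Rightarrow> ('n \<Rightarrow> complex))
     \<Rightarrow> 'n Spoly \<Rightarrow> 'n Spoly \<Rightarrow> 'n Spoly" where
  "poisson br P Q = (\<Sum>a\<in>vars P. \<Sum>b\<in>vars Q.
      pderiv_var a P * pderiv_var b Q *
      loopv (br (basisv (fst a)) (basisv (fst b))) (snd a + snd b + 1))"

definition poisson_centralizer where
  "poisson_centralizer br u = {a. poisson br u a = 0}"

inductive_set Sh :: "('n::finite \<Rightarrow> complex) set \<Rightarrow> 'n Spoly set" for H where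
  const: "Poly_Mapping.single 0 c \<in> Sh H"
| gen: "x \<in> H \<Longrightarrow> loopv x k \<in> Sh H"
| add: "P \<in> Sh H \<Longrightarrow> Q \<in> Sh H \<Longrightarrow> P + Q \<in> Sh H"
| mult: "P \<in> Sh H \<Longrightarrow> Q \<in> Sh H \<Longrightarrow> P * Q \<in> Sh H"

end

theory Submission
  imports Defs
begin


lemma sum_apply: "(sum f A) x = sum (\<lambda>a. f a x) A"
  by (induct A rule: infinite_finite_induct) auto

lemma cscale_vs: "vector_space (cscale :: complex \<Rightarrow> ('n \<Rightarrow> complex) \<Rightarrow> _)"
  by unfold_locales (auto simp: cscale_def fun_eq_iff algebra_simps)

lemma basisv_span: "module.span cscale (range (basisv :: 'n::finite \<Rightarrow> _)) = UNIV"
proof -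
  interpret vector_space "cscale :: complex \<Rightarrow> ('n \<Rightarrow> complex) \<Rightarrow> _" by (rule cscale_vs)
  have "x \<in> span (range basisv)" for x :: "'n \<Rightarrow> complex"
  proof -
    have "x = (\<Sum>i\<in>UNIV. cscale (x i) (basisv i))"
      by (auto simp: fun_eq_iff cscale_def basisv_def sum_apply if_distrib cong: if_cong)
    also have "\<dots> \<in> span (range basisv)"
      by (intro span_sum span_scale span_base) auto
    finally show ?thesis .
  qed
  then show ?thesis by auto
qed

lemma basisv_indep: "\<not> module.dependent cscale (range (basisv :: 'n::finite \<Rightarrow> _))"
proof -
  interpret vector_space "cscale :: complex \<Rightarrow> ('n \<Rightarrow> complex) \<Rightarrow> _" by (rule cscale_vs)
  have inj: "inj (basisv :: 'n \<Rightarrow> _)"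
    by (auto simp: inj_def basisv_def fun_eq_iff split: if_splits)
  show ?thesis
  proof
    assume "dependent (range (basisv :: 'n \<Rightarrow> _))"
    then obtain u v where uv: "v \<in> range basisv" "u v \<noteq> 0"
      "(\<Sum>v\<in>range basisv. cscale (u v) v) = (0 :: 'n \<Rightarrow> complex)"
      using dependent_finite[of "range basisv"] by auto
    obtain j where j: "v = basisv j" using uv by auto
    have "(\<Sum>v\<in>range basisv. cscale (u v) v) j = (\<Sum>i\<in>UNIV. cscale (u (basisv i)) (basisv i) j)"
      by (simp add: sum_apply sum.reindex[OF inj])
    also have "\<dots> = u (basisv j)"
      by (simp add: cscale_def basisv_def if_distrib cong: if_cong)
    finally show False using uv j by simp
  qed
qed

interpretation cvs: finite_dimensional_vector_space "cscale :: complex \<Rightarrow> ('n::finite \<Rightarrow> complex) \<Rightarrow> _" "range basisv"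
  using cscale_vs basisv_span basisv_indep
  by (auto simp: finite_dimensional_vector_space_def finite_dimensional_vector_space_axioms_def)

lemma cdim_UNIV: "cdim (UNIV :: ('n::finite \<Rightarrow> complex) set) = card (UNIV :: 'n set)"
proof -
  have inj: "inj (basisv :: 'n \<Rightarrow> _)"
    by (auto simp: inj_def basisv_def fun_eq_iff split: if_splits)
  show ?thesis using cvs.dim_UNIV card_image[OF inj] by simp
qed


interpretation cvs2: finite_dimensional_vector_space_pair_1 "cscale :: complex \<Rightarrow> ('n::finite \<Rightarrow> complex) \<Rightarrow> _" "range basisv" "cscale :: complex \<Rightarrow> ('m::finite \<Rightarrow> complex) \<Rightarrow> _"
  by unfold_locales

lemma rank_nullity_le:
  fixes f :: "('n::finite \<Rightarrow> complex) \<Rightarrow> ('n \<Rightarrow> complex)"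
  assumes lin: "Vector_Spaces.linear cscale cscale f" and S: "csubspace S"
  shows "cdim S \<le> cdim (S \<inter> {x. f x = 0}) + cdim (f ` S)"
proof -
  define K where "K = S \<inter> {x. f x = 0}"
  have fadd: "f (x + y) = f x + f y" and fsc: "f (cscale c x) = cscale c (f x)" for x y c
    using lin by (auto simp: Vector_Spaces.linear_iff)
  have fdiff: "f (x - y) = f x - f y" for x y
    using fadd[of "x - y" y] by (simp add: algebra_simps)
  obtain B where B: "B \<subseteq> K" "cvs.independent B" "K \<subseteq> cvs.span B" "card B = cdim K"
    using cvs.basis_exists[of K] by blast
  obtain C where C: "B \<subseteq> C" "C \<subseteq> S" "cvs.independent C" "S \<subseteq> cvs.span C"
    using cvs.maximal_independent_subset_extend[of B S] B(1,2) by (auto simp: K_def)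
  have finC: "finite C" using C(3) cvs.finiteI_independent by blast
  define D where "D = C - B"
  have dimS: "cdim S = card C" using cvs.basis_card_eq_dim[OF C(2) C(4) C(3)] by simp
  have cardC: "card C = card B + card D"
    using finC C(1) card_Diff_subset[of B C] finite_subset[OF C(1) finC] card_mono[OF finC C(1)]
    unfolding D_def by linarith
  have indD: "cvs.independent D" using C(3) cvs.independent_mono[of C D] by (auto simp: D_def)
  have indB: "cvs.independent B" using B(2) .
  have un: "{x + y |x y. x \<in> cvs.span B \<and> y \<in> cvs.span D} = cvs.span C"
  proof -
    have "B \<union> D = C" using C(1) by (auto simp: D_def)
    then show ?thesis using cvs.span_Un[of B D] by metis
  qed
  have "cdim {x + y |x y. x \<in> cvs.span B \<and> y \<in> cvs.span D} + cdim (cvs.span B \<inter> cvs.span D)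
        = cdim (cvs.span B) + cdim (cvs.span D)"
    by (rule cvs.dim_sums_Int; rule cvs.subspace_span)
  then have "cdim (cvs.span B \<inter> cvs.span D) = 0"
    unfolding un cvs.dim_span_eq_card_independent[OF indB] cvs.dim_span_eq_card_independent[OF indD]
      cvs.dim_span_eq_card_independent[OF C(3)] using cardC by linarith
  then have BD0: "cvs.span B \<inter> cvs.span D \<subseteq> {0}" using cvs.dim_eq_0 by metis
  have spanD_S: "cvs.span D \<subseteq> S"
  proof -
    have "D \<subseteq> S" using C(2) by (auto simp: D_def)
    then show ?thesis using cvs.span_minimal[of D S] S by blast
  qed
  have inj: "inj_on f (cvs.span D)"
  proof (rule inj_onI)
    fix x y assume xy: "x \<in> cvs.span D" "y \<in> cvs.span D" "f x = f y"
    have d: "x - y \<in> cvs.span D" using xy cvs.span_diff by blast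
    have "x - y \<in> S" using d spanD_S by blast
    moreover have "f (x - y) = 0" using xy(3) fdiff[of x y] by simp
    ultimately have "x - y \<in> K" by (simp add: K_def)
    then have "x - y \<in> cvs.span B" using B(3) by blast
    then have "x - y \<in> {0}" using d BD0 by blast
    then show "x = y" by simp
  qed
  have "cdim (f ` cvs.span D) = cdim (cvs.span D)"
  proof -
    have "inj_on f (cvs.span (cvs.span D))" using inj by (simp only: cvs.span_span)
    then show ?thesis by (rule cvs2.dim_image_eq[OF lin])
  qed
  also have "\<dots> = card D" using cvs.dim_span_eq_card_independent[OF indD] .
  finally have eqD: "cdim (f ` cvs.span D) = card D" .
  have "f ` cvs.span D \<subseteq> f ` S" using spanD_S by blast
  then have "cdim (f ` cvs.span D) \<le> cdim (f ` S)" by (rule cvs.dim_subset)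
  then have "card D \<le> cdim (f ` S)" using eqD by simp
  then show ?thesis using dimS cardC B(4) unfolding K_def by linarith
qed




definition lin :: "(('n \<Rightarrow> complex) \<Rightarrow> ('m \<Rightarrow> complex)) \<Rightarrow> bool" where
  "lin T \<longleftrightarrow> (\<forall>x y. T (x + y) = T x + T y) \<and> (\<forall>c x. T (cscale c x) = cscale c (T x))"

lemma cscale_simps [simp]:
  "cscale 0 x = 0" "cscale c 0 = 0" "cscale 1 x = x"
  "cscale c (x + y) = cscale c x + cscale c y"
  "cscale c (x - y) = cscale c x - cscale c y"
  "cscale c (- x) = - cscale c x"
  "cscale c (cscale d x) = cscale (c * d) x"
  by (auto simp: cscale_def fun_eq_iff algebra_simps)

lemma cscale_add_left: "cscale (c + d) x = cscale c x + cscale d x"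
  and cscale_diff_left: "cscale (c - d) x = cscale c x - cscale d x"
  by (auto simp: cscale_def fun_eq_iff algebra_simps)

lemma cscale_eq_0_iff: "cscale c x = 0 \<longleftrightarrow> c = 0 \<or> x = 0"
  by (auto simp: cscale_def fun_eq_iff)

lemma lin_add: "lin T \<Longrightarrow> T (x + y) = T x + T y" by (simp add: lin_def)
lemma lin_sc: "lin T \<Longrightarrow> T (cscale c x) = cscale c (T x)" by (simp add: lin_def)
lemma lin_0: "lin T \<Longrightarrow> T 0 = 0"
  using lin_sc[of T 0 0] by simp
lemma lin_neg: "lin T \<Longrightarrow> T (- x) = - T x"
  using lin_add[of T x "- x"] lin_0[of T] by (simp add: eq_neg_iff_add_eq_0 add.commute)
lemma lin_diff: "lin T \<Longrightarrow> T (x - y) = T x - T y"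
  using lin_add[of T x "- y"] lin_neg[of T y] by simp
lemma lin_sum: "lin T \<Longrightarrow> T (sum f I) = sum (\<lambda>i. T (f i)) I"
  by (induct I rule: infinite_finite_induct) (auto simp: lin_0 lin_add)
lemma lin_comp: "lin T \<Longrightarrow> lin S \<Longrightarrow> lin (\<lambda>x. T (S x))"
  by (simp add: lin_def)
lemma lin_id: "lin (\<lambda>x. x)" by (simp add: lin_def)
lemma lin_pow: "lin (T :: ('n \<Rightarrow> complex) \<Rightarrow> ('n \<Rightarrow> complex)) \<Longrightarrow> lin (T ^^ k)"
proof (induct k)
  case 0 then show ?case by (simp add: lin_def)
next
  case (Suc k) then show ?case by (simp add: lin_def)
qed
lemma lin_linear: "lin (T :: ('n \<Rightarrow> complex) \<Rightarrow> ('m \<Rightarrow> complex)) \<longleftrightarrow> Vector_Spaces.linear cscale cscale T"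
  using cscale_vs[where 'n='n] cscale_vs[where 'n='m] by (auto simp: lin_def Vector_Spaces.linear_iff)

lemma lin_subspace_kernel: "lin (T :: ('n::finite \<Rightarrow> complex) \<Rightarrow> ('m \<Rightarrow> complex)) \<Longrightarrow> csubspace {x. T x = 0}"
  unfolding cvs.subspace_def by (auto simp: lin_0 lin_add lin_sc)

lemma lin_subspace_image: "lin (T :: ('n::finite \<Rightarrow> complex) \<Rightarrow> ('n \<Rightarrow> complex)) \<Longrightarrow> csubspace S \<Longrightarrow> csubspace (T ` S)"
  unfolding cvs.subspace_def
proof (intro conjI ballI allI)
  assume T: "lin T" and S: "0 \<in> S \<and> (\<forall>x\<in>S. \<forall>y\<in>S. x + y \<in> S) \<and> (\<forall>c. \<forall>x\<in>S. cscale c x \<in> S)"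
  show "0 \<in> T ` S" using S lin_0[OF T] by (metis image_eqI)
  fix x y assume "x \<in> T ` S" "y \<in> T ` S"
  then obtain a b where "a \<in> S" "b \<in> S" "x = T a" "y = T b" by auto
  then show "x + y \<in> T ` S" using S lin_add[OF T, of a b] by (metis image_eqI)
next
  fix c x
  assume T: "lin T" and S: "0 \<in> S \<and> (\<forall>x\<in>S. \<forall>y\<in>S. x + y \<in> S) \<and> (\<forall>c. \<forall>x\<in>S. cscale c x \<in> S)"
    and "x \<in> T ` S"
  then obtain a where "a \<in> S" "x = T a" by auto
  then show "cscale c x \<in> T ` S" using S lin_sc[OF T, of c a] by (metis image_eqI)
qed


definition ssum :: "'i set \<Rightarrow> ('i \<Rightarrow> ('n \<Rightarrow> complex) set) \<Rightarrow> ('n \<Rightarrow> complex) set" where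
  "ssum I S = {(\<Sum>i\<in>I. v i) | v. \<forall>i\<in>I. v i \<in> S i}"

lemma ssum_empty: "ssum {} S = {0}"
  by (auto simp: ssum_def)

lemma ssum_insert:
  assumes "a \<notin> I" "finite I"
  shows "ssum (insert a I) S = {x + y | x y. x \<in> S a \<and> y \<in> ssum I S}"
proof (intro set_eqI iffI)
  fix z assume "z \<in> ssum (insert a I) S"
  then obtain v where v: "z = (\<Sum>i\<in>insert a I. v i)" "\<forall>i\<in>insert a I. v i \<in> S i"
    by (auto simp: ssum_def)
  then have "z = v a + (\<Sum>i\<in>I. v i)" using assms by simp
  then show "z \<in> {x + y | x y. x \<in> S a \<and> y \<in> ssum I S}"
    using v(2) by (auto simp: ssum_def)
next
  fix z assume "z \<in> {x + y | x y. x \<in> S a \<and> y \<in> ssum I S}"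
  then obtain x v where xv: "z = x + (\<Sum>i\<in>I. v i)" "x \<in> S a" "\<forall>i\<in>I. v i \<in> S i"
    by (auto simp: ssum_def)
  define w where "w = v(a := x)"
  have "(\<Sum>i\<in>I. w i) = (\<Sum>i\<in>I. v i)" using assms(1) by (intro sum.cong) (auto simp: w_def)
  then have "z = (\<Sum>i\<in>insert a I. w i)" using xv(1) assms by (simp add: w_def)
  moreover have "\<forall>i\<in>insert a I. w i \<in> S i" using xv(2,3) by (auto simp: w_def)
  ultimately show "z \<in> ssum (insert a I) S" by (auto simp: ssum_def)
qed

lemma ssum_subspace:
  assumes "finite I" "\<And>i. i \<in> I \<Longrightarrow> csubspace (S i)"
  shows "csubspace (ssum I (S :: _ \<Rightarrow> ('n::finite \<Rightarrow> complex) set))"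
  using assms
proof (induct I rule: finite_induct)
  case empty then show ?case by (simp add: ssum_empty)
next
  case (insert a I)
  then show ?case by (simp add: ssum_insert cvs.subspace_sums)
qed

lemma ssum_le:
  assumes "csubspace T" "\<And>i. i \<in> I \<Longrightarrow> S i \<subseteq> T"
  shows "ssum I (S :: _ \<Rightarrow> ('n::finite \<Rightarrow> complex) set) \<subseteq> T"
proof
  fix z assume "z \<in> ssum I S"
  then obtain v where v: "z = (\<Sum>i\<in>I. v i)" "\<forall>i\<in>I. v i \<in> S i" by (auto simp: ssum_def)
  have "(\<Sum>i\<in>I. v i) \<in> T" using v(2) assms(2) by (intro cvs.subspace_sum[OF assms(1)]) blast
  then show "z \<in> T" using v(1) by simp
qed

declare zero_fun_apply[simp del] plus_fun_apply[simp del] minus_apply[simp del] uminus_apply[simp del]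

locale sl2 =
  fixes A E F :: "('n::finite \<Rightarrow> complex) \<Rightarrow> ('n \<Rightarrow> complex)"
  assumes linA: "lin A" and linE: "lin E" and linF: "lin F"
    and AE: "\<And>x. A (E x) = E (A x) + cscale 2 (E x)"
    and AF: "\<And>x. A (F x) = F (A x) - cscale 2 (F x)"
    and EF: "\<And>x. E (F x) - F (E x) = A x"
begin

definition sh :: "complex \<Rightarrow> ('n \<Rightarrow> complex) \<Rightarrow> ('n \<Rightarrow> complex)" where
  "sh c x = A x - cscale c x"

definition gk :: "complex \<Rightarrow> nat \<Rightarrow> ('n \<Rightarrow> complex) set" where
  "gk c m = {x. (sh c ^^ m) x = 0}"

lemma lin_sh: "lin (sh c)"
  using linA by (simp add: lin_def sh_def algebra_simps)

lemma lin_shp: "lin (sh c ^^ m)" by (rule lin_pow[OF lin_sh])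

lemma gk_subspace: "csubspace (gk c m)"
  unfolding gk_def by (rule lin_subspace_kernel[OF lin_shp])

lemma sh_comm: "sh c (sh d x) = sh d (sh c x)"
  by (simp add: sh_def lin_diff[OF linA] lin_sc[OF linA] mult.commute)

lemma shp_comm: "(sh c ^^ m) (sh d x) = sh d ((sh c ^^ m) x)"
  by (induct m) (auto simp: sh_comm)

lemma shp_comm_gen:
  assumes "lin T" "\<And>x. T (sh d x) = sh d (T x)"
  shows "(sh d ^^ m) (T x) = T ((sh d ^^ m) x)"
  using assms by (induct m) auto

lemma shpp_comm: "(sh c ^^ m) ((sh d ^^ k) x) = (sh d ^^ k) ((sh c ^^ m) x)"
  by (rule shp_comm_gen[OF lin_shp]) (rule shp_comm)

lemma gk_sh: "x \<in> gk c m \<Longrightarrow> sh d x \<in> gk c m"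
  unfolding gk_def using shp_comm[where c=c and m=m and d=d and x=x] lin_0[OF lin_sh] by simp

lemma sh_inj_aux:
  assumes "sh a x = 0"
  shows "(sh b ^^ k) x = cscale ((a - b) ^ k) x"
proof (induct k)
  case 0 then show ?case by simp
next
  case (Suc k)
  have Ax: "A x = cscale a x" using assms by (simp add: sh_def)
  have "(sh b ^^ Suc k) x = sh b (cscale ((a - b) ^ k) x)" using Suc by simp
  also have "\<dots> = cscale ((a - b) ^ k) (sh b x)" using lin_sh by (simp add: lin_sc)
  also have "sh b x = cscale (a - b) x" using Ax by (simp add: sh_def cscale_diff_left)
  finally show ?case by (simp add: algebra_simps)
qed

lemma sh_inj:
  assumes "a \<noteq> b" "x \<in> gk b m" "sh a x = 0"
  shows "x = 0"
proof -
  have "cscale ((a - b) ^ m) x = 0"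
    using sh_inj_aux[OF assms(3), where b=b and k=m] assms(2) by (simp add: gk_def)
  then show ?thesis using assms(1) by (simp add: cscale_eq_0_iff)
qed

lemma shp_inj:
  assumes "a \<noteq> b" "x \<in> gk b m" "(sh a ^^ k) x = 0"
  shows "x = 0"
  using assms(2,3)
proof (induct k arbitrary: x)
  case 0 then show ?case by simp
next
  case (Suc k)
  have "(sh a ^^ k) (sh a x) = 0" using Suc(3) by (metis funpow_Suc_right comp_apply)
  then have "sh a x = 0" using Suc(1)[of "sh a x"] gk_sh[OF Suc(2)] by blast
  then show ?case using sh_inj[OF assms(1) Suc(2)] by blast
qed

lemma gk_indep:
  assumes "finite I" "inj_on lam I" "\<And>i. i \<in> I \<Longrightarrow> v i \<in> gk (lam i) m" "(\<Sum>i\<in>I. v i) = 0"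
  shows "\<forall>i\<in>I. v i = 0"
  using assms
proof (induct I arbitrary: v rule: finite_induct)
  case empty then show ?case by simp
next
  case (insert a I)
  define T where "T = sh (lam a) ^^ m"
  have linT: "lin T" unfolding T_def by (rule lin_shp)
  have Ta: "T (v a) = 0" using insert(5)[of a] by (simp add: gk_def T_def)
  have "T (\<Sum>i\<in>insert a I. v i) = 0" using insert(6) lin_0[OF linT] by simp
  then have sumI: "(\<Sum>i\<in>I. T (v i)) = 0" using insert(1,2) Ta by (simp add: lin_sum[OF linT] lin_add[OF linT])
  have TvI: "T (v i) \<in> gk (lam i) m" if "i \<in> I" for i
  proof -
    have "v i \<in> gk (lam i) m" using insert(5) that by auto
    then have "(sh (lam i) ^^ m) (T (v i)) = 0"
      unfolding T_def gk_def using shpp_comm[where c="lam i" and m=m and d="lam a" and k=m and x="v i"]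
        lin_0[OF lin_shp] by (simp add: gk_def)
    then show ?thesis by (simp add: gk_def)
  qed
  have "\<forall>i\<in>I. T (v i) = 0"
    using insert(3)[of "\<lambda>i. T (v i)"] insert(4) TvI sumI by (auto simp: inj_on_insert)
  then have zI: "\<forall>i\<in>I. v i = 0"
  proof (intro ballI)
    fix i assume i: "i \<in> I" "\<forall>i\<in>I. T (v i) = 0"
    then have "lam a \<noteq> lam i" using insert(2,4) by (auto simp: inj_on_def)
    then show "v i = 0" using shp_inj[where a="lam a" and b="lam i" and x="v i" and m=m and k=m] insert(5) i by (auto simp: T_def)
  qed
  then have "v a = 0" using insert(6) insert(1,2) by simp
  then show ?case using zI by simp
qed


lemma ssum_dim:
  assumes "finite I" "inj_on lam I" "\<And>i. i \<in> I \<Longrightarrow> csubspace (S i)"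
    "\<And>i. i \<in> I \<Longrightarrow> S i \<subseteq> gk (lam i) m"
  shows "cdim (ssum I S) = (\<Sum>i\<in>I. cdim (S i))"
  using assms
proof (induct I rule: finite_induct)
  case empty then show ?case by (simp add: ssum_empty)
next
  case (insert a I)
  have sub: "csubspace (ssum I S)" using insert by (intro ssum_subspace) auto
  have int0: "S a \<inter> ssum I S \<subseteq> {0}"
  proof
    fix x assume x: "x \<in> S a \<inter> ssum I S"
    then obtain v where v: "x = (\<Sum>i\<in>I. v i)" "\<forall>i\<in>I. v i \<in> S i" by (auto simp: ssum_def)
    define w where "w = v(a := - x)"
    have "(\<Sum>i\<in>I. w i) = (\<Sum>i\<in>I. v i)" using insert(2) by (intro sum.cong) (auto simp: w_def)
    then have "(\<Sum>i\<in>insert a I. w i) = 0" using insert(1,2) v(1) by (simp add: w_def)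
    moreover have "\<And>i. i \<in> insert a I \<Longrightarrow> w i \<in> gk (lam i) m"
    proof -
      fix i assume i: "i \<in> insert a I"
      show "w i \<in> gk (lam i) m"
      proof (cases "i = a")
        case True
        have "- x \<in> S a" using x cvs.subspace_neg insert(5)[of a] by auto
        then show ?thesis using True insert(6)[of a] by (auto simp: w_def)
      next
        case False
        then show ?thesis using i v(2) insert(6)[of i] by (auto simp: w_def)
      qed
    qed
    ultimately have "\<forall>i\<in>insert a I. w i = 0"
      using gk_indep[of "insert a I" lam w m] insert(1,4) by blast
    then have "- x = 0" by (auto simp: w_def)
    then show "x \<in> {0}" by simp
  qed
  have "cdim {x + y |x y. x \<in> S a \<and> y \<in> ssum I S} + cdim (S a \<inter> ssum I S) = cdim (S a) + cdim (ssum I S)"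
    by (rule cvs.dim_sums_Int) (use insert sub in auto)
  moreover have "cdim (S a \<inter> ssum I S) = 0" using int0 cvs.dim_eq_0 by blast
  moreover have "cdim (ssum I S) = (\<Sum>i\<in>I. cdim (S i))"
    using insert by (auto simp: inj_on_insert)
  ultimately show ?case using insert(1,2) by (simp add: ssum_insert)
qed

lemma nilp:
  assumes linT: "lin T" and Tgk: "\<And>c x. x \<in> gk c m \<Longrightarrow> T x \<in> gk (c + d) m" and d: "d \<noteq> 0"
    and x: "x \<in> gk c m"
  shows "(T ^^ card (UNIV :: 'n set)) x = 0"
proof (rule ccontr)
  define N where "N = card (UNIV :: 'n set)"
  assume "(T ^^ card (UNIV :: 'n set)) x \<noteq> 0"
  then have nz: "(T ^^ N) x \<noteq> 0" by (simp add: N_def)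
  have nzj: "(T ^^ j) x \<noteq> 0" if "j \<le> N" for j
  proof
    assume "(T ^^ j) x = 0"
    then have "(T ^^ (N - j)) ((T ^^ j) x) = 0" using lin_0[OF lin_pow[OF linT]] by simp
    then show False using nz that by (metis funpow_add comp_apply le_add_diff_inverse2)
  qed
  have gkj: "(T ^^ j) x \<in> gk (c + of_nat j * d) m" for j
  proof (induct j)
    case 0 then show ?case using x by simp
  next
    case (Suc j)
    then have "T ((T ^^ j) x) \<in> gk (c + of_nat j * d + d) m" using Tgk by blast
    then show ?case by (simp add: algebra_simps)
  qed
  define S where "S j = cspan {(T ^^ j) x}" for j
  have inj: "inj_on (\<lambda>j. c + of_nat j * d) {0..N}"
    using d by (auto simp: inj_on_def)
  have "cdim (ssum {0..N} S) = (\<Sum>j\<in>{0..N}. cdim (S j))"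
  proof (rule ssum_dim[OF _ inj])
    fix j assume "j \<in> {0..N}"
    show "csubspace (S j)" by (simp add: S_def cvs.subspace_span)
    show "S j \<subseteq> gk (c + of_nat j * d) m"
      unfolding S_def by (rule cvs.span_minimal) (use gkj gk_subspace in auto)
  qed simp
  also have "\<dots> = (\<Sum>j\<in>{0..N}. 1)"
    using nzj by (intro sum.cong) (auto simp: S_def)
  finally have "cdim (ssum {0..N} S) = N + 1" by simp
  moreover have "cdim (ssum {0..N} S) \<le> N"
  proof -
    have "cdim (ssum {0..N} S) \<le> cdim (UNIV :: ('n \<Rightarrow> complex) set)" by (rule cvs.dim_subset) simp
    then show ?thesis unfolding cdim_UNIV N_def .
  qed
  ultimately show False by simp
qed

lemma sh_E: "sh (c + 2) (E x) = E (sh c x)"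
  by (simp add: sh_def AE lin_diff[OF linE] lin_sc[OF linE] algebra_simps)

lemma sh_F: "sh (c - 2) (F x) = F (sh c x)"
  by (simp add: sh_def AF lin_diff[OF linF] lin_sc[OF linF] algebra_simps)

lemma gk_E: "x \<in> gk c m \<Longrightarrow> E x \<in> gk (c + 2) m"
proof -
  have "(sh (c + 2) ^^ m) (E x) = E ((sh c ^^ m) x)" for m
    by (induct m) (simp_all add: sh_E)
  then show "x \<in> gk c m \<Longrightarrow> E x \<in> gk (c + 2) m" by (simp add: gk_def lin_0[OF linE])
qed

lemma gk_F: "x \<in> gk c m \<Longrightarrow> F x \<in> gk (c + (-2)) m"
proof -
  have "(sh (c - 2) ^^ m) (F x) = F ((sh c ^^ m) x)" for m
    by (induct m) (simp_all add: sh_F)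
  then show "x \<in> gk c m \<Longrightarrow> F x \<in> gk (c + (-2)) m" by (simp add: gk_def lin_0[OF linF])
qed

lemma nilpE: "x \<in> gk c m \<Longrightarrow> (E ^^ card (UNIV :: 'n set)) x = 0"
  by (rule nilp[OF linE gk_E]) auto

lemma nilpF: "x \<in> gk c m \<Longrightarrow> (F ^^ card (UNIV :: 'n set)) x = 0"
  by (rule nilp[OF linF gk_F]) auto


lemma sh0: "sh 0 x = A x" by (simp add: sh_def)

lemma W_sh: "E x = 0 \<Longrightarrow> E (sh c x) = 0"
  using sh_E[of c x] lin_0[OF lin_sh] by simp

fun pA :: "nat \<Rightarrow> ('n \<Rightarrow> complex) \<Rightarrow> ('n \<Rightarrow> complex)" where
  "pA 0 x = x"
| "pA (Suc k) x = sh (of_nat k) (pA k x)"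

lemma lin_pA: "lin (pA k)"
proof (induct k)
  case 0 show ?case by (simp add: lin_def)
next
  case (Suc k)
  have "pA (Suc k) = (\<lambda>x. sh (of_nat k) (pA k x))" by (simp add: fun_eq_iff)
  then show ?case using lin_comp[OF lin_sh Suc] by simp
qed

lemma pA_sh_comm: "pA k (sh c x) = sh c (pA k x)"
  by (induct k) (auto simp: sh_comm)

lemma W_pA: "E x = 0 \<Longrightarrow> E (pA k x) = 0"
  by (induct k) (auto simp: W_sh)

lemma gk_pA: "x \<in> gk c m \<Longrightarrow> pA k x \<in> gk c m"
  by (induct k) (auto simp: gk_sh)

lemma F_pow_sh: "sh c ((F ^^ k) x) = (F ^^ k) (sh (c + 2 * of_nat k) x)"
proof (induct k arbitrary: c)
  case 0 then show ?case by simp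
next
  case (Suc k)
  have "sh c ((F ^^ Suc k) x) = sh (c + 2 - 2) (F ((F ^^ k) x))" by simp
  also have "\<dots> = F (sh (c + 2) ((F ^^ k) x))" by (rule sh_F)
  also have "\<dots> = F ((F ^^ k) (sh (c + 2 + 2 * of_nat k) x))" using Suc by simp
  finally show ?case by (simp add: algebra_simps)
qed

lemma EF_formula:
  assumes "E x = 0"
  shows "E ((F ^^ Suc k) x) = cscale (of_nat (Suc k)) ((F ^^ k) (sh (of_nat k) x))"
proof (induct k)
  case 0
  have "E (F x) = F (E x) + A x" using EF[of x] by (simp add: algebra_simps)
  then show ?case using assms lin_0[OF linF] by (simp add: sh0)
next
  case (Suc k)
  define y where "y = (F ^^ Suc k) x"
  have "E ((F ^^ Suc (Suc k)) x) = E (F y)" by (simp add: y_def)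
  also have "\<dots> = F (E y) + A y" using EF[of y] by (simp add: algebra_simps)
  also have "E y = cscale (of_nat (Suc k)) ((F ^^ k) (sh (of_nat k) x))" using Suc by (simp add: y_def)
  also have "A y = (F ^^ Suc k) (sh (2 * of_nat (Suc k)) x)"
    using F_pow_sh[of 0 "Suc k" x] by (simp add: sh0 y_def)
  also have "F (cscale (of_nat (Suc k)) ((F ^^ k) (sh (of_nat k) x))) =
      (F ^^ Suc k) (cscale (of_nat (Suc k)) (sh (of_nat k) x))"
    using lin_sc[OF linF] lin_sc[OF lin_pow[OF linF]] by simp
  also have "(F ^^ Suc k) (cscale (of_nat (Suc k)) (sh (of_nat k) x)) + (F ^^ Suc k) (sh (2 * of_nat (Suc k)) x)
      = (F ^^ Suc k) (cscale (of_nat (Suc k)) (sh (of_nat k) x) + sh (2 * of_nat (Suc k)) x)"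
    by (rule lin_add[OF lin_pow[OF linF], symmetric])
  also have "cscale (of_nat (Suc k)) (sh (of_nat k) x) + sh (2 * of_nat (Suc k)) x
      = cscale (of_nat (Suc (Suc k))) (sh (of_nat (Suc k)) x)"
    by (simp add: sh_def fun_eq_iff cscale_def plus_fun_apply minus_apply algebra_simps)
  finally show ?case by (simp add: lin_sc[OF linF] lin_sc[OF lin_pow[OF linF]])
qed

lemma EkFk:
  assumes "E x = 0"
  shows "(E ^^ k) ((F ^^ k) x) = cscale (fact k) (pA k x)"
  using assms
proof (induct k arbitrary: x)
  case 0 then show ?case by simp
next
  case (Suc k)
  have "(E ^^ Suc k) ((F ^^ Suc k) x) = (E ^^ k) (E ((F ^^ Suc k) x))"
    by (metis funpow_Suc_right comp_apply)
  also have "\<dots> = (E ^^ k) (cscale (of_nat (Suc k)) ((F ^^ k) (sh (of_nat k) x)))"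
    using EF_formula[OF Suc(2)] by simp
  also have "\<dots> = cscale (of_nat (Suc k)) ((E ^^ k) ((F ^^ k) (sh (of_nat k) x)))"
    using lin_sc[OF lin_pow[OF linE]] by simp
  also have "\<dots> = cscale (of_nat (Suc k)) (cscale (fact k) (pA k (sh (of_nat k) x)))"
    using Suc(1)[of "sh (of_nat k) x"] W_sh[OF Suc(2)] by simp
  also have "\<dots> = cscale (fact (Suc k)) (pA (Suc k) x)"
    by (simp add: pA_sh_comm algebra_simps)
  finally show ?case .
qed

lemma pA_eig:
  assumes "sh c x = 0"
  shows "pA k x = cscale (\<Prod>i<k. (c - of_nat i)) x"
proof (induct k)
  case 0 then show ?case by simp
next
  case (Suc k)
  have Ax: "A x = cscale c x" using assms by (simp add: sh_def)
  have "pA (Suc k) x = sh (of_nat k) (cscale (\<Prod>i<k. (c - of_nat i)) x)" using Suc by simp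
  also have "\<dots> = cscale (\<Prod>i<k. (c - of_nat i)) (sh (of_nat k) x)" by (simp add: lin_sc[OF lin_sh])
  also have "sh (of_nat k) x = cscale (c - of_nat k) x" by (simp add: sh_def Ax cscale_diff_left)
  finally show ?case by (simp add: algebra_simps)
qed

lemma pA_inj:
  assumes "\<forall>i<k. c \<noteq> of_nat i" "x \<in> gk c m" "pA k x = 0"
  shows "x = 0"
  using assms
proof (induct k arbitrary: x)
  case 0 then show ?case by simp
next
  case (Suc k)
  have "sh (of_nat k) (pA k x) = 0" using Suc(4) by simp
  then have "pA k x = 0" using sh_inj[of "of_nat k" c "pA k x" m] Suc(2) gk_pA[OF Suc(3)] by auto
  then show ?case using Suc by auto
qed

lemma W_diag_aux:
  assumes "x \<in> gk \<mu> m" "pA k x = 0"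
  shows "sh \<mu> x = 0"
  using assms
proof (induct k arbitrary: x)
  case 0 then show ?case using lin_0[OF lin_sh] by simp
next
  case (Suc k)
  have h: "sh (of_nat k) (pA k x) = 0" using Suc(3) by simp
  show ?case
  proof (cases "\<mu> = of_nat k")
    case False
    then have "pA k x = 0" using sh_inj[of "of_nat k" \<mu> "pA k x" m] h gk_pA[OF Suc(2)] by auto
    then show ?thesis using Suc by auto
  next
    case True
    then have "pA k (sh \<mu> x) = 0" using h by (simp add: pA_sh_comm)
    moreover have "\<forall>i<k. \<mu> \<noteq> of_nat i" using True by auto
    ultimately show ?thesis using pA_inj[of k \<mu> "sh \<mu> x" m] gk_sh[OF Suc(2)] by auto
  qed
qed

lemma W_diag:
  assumes "E x = 0" "x \<in> gk \<mu> m"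
  shows "sh \<mu> x = 0"
proof -
  define N where "N = card (UNIV :: 'n set)"
  have "(F ^^ N) x = 0" using nilpF[OF assms(2)] by (simp add: N_def)
  then have "(E ^^ N) ((F ^^ N) x) = 0" using lin_0[OF lin_pow[OF linE]] by simp
  then have "cscale (fact N) (pA N x) = 0" using EkFk[OF assms(1)] by simp
  then have "pA N x = 0" by (simp add: cscale_eq_0_iff)
  then show ?thesis using W_diag_aux[OF assms(2)] by blast
qed

end
context sl2 begin

definition "Kz j = {x. x \<in> gk 0 2 \<and> (E ^^ j) x = 0}"
definition "Kk j = {x. A x = 0 \<and> (E ^^ j) x = 0}"
definition "Wj j = {x. E x = 0 \<and> sh (2 * of_nat j) x = 0}"

lemma Kz_sub: "csubspace (Kz j)"
proof -
  have "Kz j = gk 0 2 \<inter> {x. (E ^^ j) x = 0}" by (auto simp: Kz_def)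
  then show ?thesis using gk_subspace lin_subspace_kernel[OF lin_pow[OF linE]] cvs.subspace_inter by metis
qed

lemma Kk_sub: "csubspace (Kk j)"
proof -
  have "Kk j = {x. A x = 0} \<inter> {x. (E ^^ j) x = 0}" by (auto simp: Kk_def)
  then show ?thesis using lin_subspace_kernel[OF linA] lin_subspace_kernel[OF lin_pow[OF linE]] cvs.subspace_inter by metis
qed

lemma Wj_sub: "csubspace (Wj j)"
proof -
  have "Wj j = {x. E x = 0} \<inter> {x. sh (2 * of_nat j) x = 0}" by (auto simp: Wj_def)
  then show ?thesis using lin_subspace_kernel[OF linE] lin_subspace_kernel[OF lin_sh] cvs.subspace_inter by metis
qed

lemma gk_Epow: "x \<in> gk c m \<Longrightarrow> (E ^^ j) x \<in> gk (c + 2 * of_nat j) m"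
proof (induct j)
  case 0 then show ?case by simp
next
  case (Suc j)
  then have "E ((E ^^ j) x) \<in> gk (c + 2 * of_nat j + 2) m" using gk_E by blast
  then show ?case by (simp add: algebra_simps)
qed

lemma step_Kz: "cdim (Kz (Suc j)) \<le> cdim (Kz j) + cdim (Wj j)"
proof -
  have lin: "Vector_Spaces.linear cscale cscale (E ^^ j)" using lin_pow[OF linE] lin_linear by blast
  have "cdim (Kz (Suc j)) \<le> cdim (Kz (Suc j) \<inter> {x. (E ^^ j) x = 0}) + cdim ((E ^^ j) ` Kz (Suc j))"
    by (rule rank_nullity_le[OF lin Kz_sub])
  moreover have "Kz (Suc j) \<inter> {x. (E ^^ j) x = 0} = Kz j"
    using lin_0[OF linE] by (auto simp: Kz_def)
  moreover have "(E ^^ j) ` Kz (Suc j) \<subseteq> Wj j"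
  proof
    fix y assume "y \<in> (E ^^ j) ` Kz (Suc j)"
    then obtain x where x: "x \<in> Kz (Suc j)" "y = (E ^^ j) x" by auto
    have Ey: "E y = 0" using x by (simp add: Kz_def)
    have "y \<in> gk (2 * of_nat j) 2" using gk_Epow[of x 0 2 j] x by (simp add: Kz_def)
    then have "sh (2 * of_nat j) y = 0" using W_diag[OF Ey] by blast
    then show "y \<in> Wj j" using Ey by (simp add: Wj_def)
  qed
  then have "cdim ((E ^^ j) ` Kz (Suc j)) \<le> cdim (Wj j)" by (rule cvs.dim_subset)
  ultimately show ?thesis by simp
qed

lemma prod_nz: "(\<Prod>i<j. (2 * of_nat j - of_nat i :: complex)) \<noteq> 0"
proof -
  have "(2 * of_nat j - of_nat i :: complex) \<noteq> 0" if "i < j" for i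
  proof
    assume "(2 * of_nat j - of_nat i :: complex) = 0"
    then have "(of_nat (2 * j) :: complex) = of_nat i" by simp
    then have "2 * j = i" using of_nat_eq_iff by blast
    then show False using that by simp
  qed
  then show ?thesis by (simp add: prod_zero_iff)
qed

lemma EF_Wj: "w \<in> Wj j \<Longrightarrow> (E ^^ j) ((F ^^ j) w) = cscale (fact j * (\<Prod>i<j. (2 * of_nat j - of_nat i))) w"
  using EkFk[of w j] pA_eig[of "2 * of_nat j" w j] by (simp add: Wj_def)

lemma step_Kk: "cdim (Kk j) + cdim (Wj j) \<le> cdim (Kk (Suc j))"
proof -
  define T where "T = (F ^^ j) ` Wj j"
  define c :: complex where "c = fact j * (\<Prod>i<j. (2 * of_nat j - of_nat i))"
  have c0: "c \<noteq> 0" using prod_nz by (simp add: c_def)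
  have linF': "lin (F ^^ j)" using lin_pow[OF linF] .
  have lin: "Vector_Spaces.linear cscale cscale (F ^^ j)" using linF' lin_linear by blast
  have zero: "w = 0" if "w \<in> Wj j" "(E ^^ j) ((F ^^ j) w) = 0" for w
    using EF_Wj[OF that(1)] that(2) c0 by (simp add: c_def cscale_eq_0_iff)
  have inj: "inj_on (F ^^ j) (cvs.span (Wj j))"
  proof (rule inj_onI)
    fix x y assume xy: "x \<in> cvs.span (Wj j)" "y \<in> cvs.span (Wj j)" "(F ^^ j) x = (F ^^ j) y"
    have xyW: "x - y \<in> Wj j" using xy(1,2) Wj_sub cvs.subspace_diff cvs.span_eq_iff by metis
    have "(F ^^ j) (x - y) = 0" using xy(3) lin_diff[OF linF'] by simp
    then have "(E ^^ j) ((F ^^ j) (x - y)) = 0" using lin_0[OF lin_pow[OF linE]] by simp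
    then show "x = y" using zero[OF xyW] by simp
  qed
  have dimT: "cdim T = cdim (Wj j)"
    unfolding T_def by (rule cvs2.dim_image_eq[OF lin inj])
  have Tsub: "csubspace T" unfolding T_def by (rule lin_subspace_image[OF linF' Wj_sub])
  have TK: "T \<subseteq> Kk (Suc j)"
  proof
    fix x assume "x \<in> T"
    then obtain w where w: "w \<in> Wj j" "x = (F ^^ j) w" by (auto simp: T_def)
    have "A x = (F ^^ j) (sh (0 + 2 * of_nat j) w)" using F_pow_sh[of 0 j w] w(2) by (simp add: sh0)
    then have Ax: "A x = 0" using w(1) lin_0[OF linF'] by (simp add: Wj_def)
    have "(E ^^ Suc j) x = E ((E ^^ j) x)" by simp
    also have "(E ^^ j) x = cscale c w" using EF_Wj[OF w(1)] w(2) by (simp add: c_def)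
    also have "E (cscale c w) = 0" using w(1) lin_sc[OF linE] by (simp add: Wj_def)
    finally show "x \<in> Kk (Suc j)" using Ax by (simp add: Kk_def)
  qed
  have int0: "Kk j \<inter> T \<subseteq> {0}"
  proof
    fix x assume x: "x \<in> Kk j \<inter> T"
    then obtain w where w: "w \<in> Wj j" "x = (F ^^ j) w" by (auto simp: T_def)
    then have "w = 0" using zero x by (simp add: Kk_def)
    then show "x \<in> {0}" using w lin_0[OF linF'] by simp
  qed
  have "cdim {x + y |x y. x \<in> Kk j \<and> y \<in> T} + cdim (Kk j \<inter> T) = cdim (Kk j) + cdim T"
    by (rule cvs.dim_sums_Int[OF Kk_sub Tsub])
  moreover have "cdim (Kk j \<inter> T) = 0" using int0 cvs.dim_eq_0 by blast
  moreover have "{x + y |x y. x \<in> Kk j \<and> y \<in> T} \<subseteq> Kk (Suc j)"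
  proof -
    have "Kk j \<subseteq> Kk (Suc j)" using lin_0[OF linE] by (auto simp: Kk_def)
    then show ?thesis using TK Kk_sub[of "Suc j"] cvs.subspace_add by blast
  qed
  then have "cdim {x + y |x y. x \<in> Kk j \<and> y \<in> T} \<le> cdim (Kk (Suc j))" by (rule cvs.dim_subset)
  ultimately show ?thesis using dimT by simp
qed

lemma Kz_le_Kk: "cdim (Kz j) \<le> cdim (Kk j)"
proof (induct j)
  case 0
  have "Kz 0 \<subseteq> {0}" by (auto simp: Kz_def)
  then show ?case using cvs.dim_eq_0 by (metis le0)
next
  case (Suc j)
  then show ?case using step_Kz[of j] step_Kk[of j] by linarith
qed

lemma Kk_sub_Kz: "Kk j \<subseteq> Kz j"
  by (auto simp: Kk_def Kz_def gk_def sh0 numeral_2_eq_2 lin_0[OF linA])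

lemma Kz_eq_Kk: "Kz j = Kk j"
  using cvs.subspace_dim_equal[OF Kk_sub Kz_sub Kk_sub_Kz Kz_le_Kk] by simp

theorem ker_sq: "A (A x) = 0 \<Longrightarrow> A x = 0"
proof -
  assume h: "A (A x) = 0"
  define N where "N = card (UNIV :: 'n set)"
  have x: "x \<in> gk 0 2" using h by (simp add: gk_def sh0 numeral_2_eq_2)
  then have "x \<in> Kz N" using nilpE[OF x] by (simp add: Kz_def N_def)
  then show "A x = 0" by (simp add: Kz_eq_Kk Kk_def)
qed

lemma Kz_bound: "cdim (Kz j) \<le> (\<Sum>i<j. cdim (Wj i))"
proof (induct j)
  case 0
  have "Kz 0 \<subseteq> {0}" by (auto simp: Kz_def)
  then show ?case using cvs.dim_eq_0 by (metis le0)
next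
  case (Suc j)
  then show ?case using step_Kz[of j] by simp
qed

theorem ker_dim: "cdim {x. A x = 0} \<le> cdim {x. E x = 0}"
proof -
  define N where "N = card (UNIV :: 'n set)"
  have "{x. A x = 0} \<subseteq> Kz N"
  proof
    fix x assume "x \<in> {x. A x = 0}"
    then have x: "x \<in> gk 0 2" by (simp add: gk_def sh0 numeral_2_eq_2 lin_0[OF linA])
    then show "x \<in> Kz N" using nilpE[OF x] by (simp add: Kz_def N_def)
  qed
  then have "cdim {x. A x = 0} \<le> cdim (Kz N)" by (rule cvs.dim_subset)
  also have "\<dots> \<le> (\<Sum>i<N. cdim (Wj i))" by (rule Kz_bound)
  also have "\<dots> = cdim (ssum {..<N} Wj)"
  proof (rule ssum_dim[symmetric, where lam="\<lambda>i. 2 * of_nat i" and m=1])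
    show "inj_on (\<lambda>i. 2 * of_nat i :: complex) {..<N}" by (auto simp: inj_on_def)
    fix i show "csubspace (Wj i)" by (rule Wj_sub)
    show "Wj i \<subseteq> gk (2 * of_nat i) 1" by (auto simp: Wj_def gk_def)
  qed simp
  also have "\<dots> \<le> cdim {x. E x = 0}"
    by (rule cvs.dim_subset, rule ssum_le[OF lin_subspace_kernel[OF linE]]) (auto simp: Wj_def)
  finally show ?thesis .
qed

end
lemma group_inverse:
  fixes A :: "('n::finite \<Rightarrow> complex) \<Rightarrow> ('n \<Rightarrow> complex)"
  assumes linA: "lin A" and sq: "\<And>x. A (A x) = 0 \<Longrightarrow> A x = 0"
  shows "\<exists>G. lin G \<and> (\<forall>x. A (G x) = G (A x)) \<and> (\<forall>x. A (G (A x)) = A x) \<and> (\<forall>x. G (A (G x)) = G x)"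
proof -
  define K where "K = {x. A x = 0}"
  define R where "R = range A"
  have Ksub: "csubspace K" unfolding K_def by (rule lin_subspace_kernel[OF linA])
  have Rsub: "csubspace R" unfolding R_def using lin_subspace_image[OF linA, of UNIV] by simp
  have KR: "K \<inter> R \<subseteq> {0}"
  proof
    fix y assume "y \<in> K \<inter> R"
    then obtain z where "y = A z" "A (A z) = 0" by (auto simp: K_def R_def)
    then show "y \<in> {0}" using sq by auto
  qed
  have linA': "Vector_Spaces.linear cscale cscale A" using linA lin_linear by blast
  have "cdim (UNIV :: ('n \<Rightarrow> complex) set) \<le> cdim (UNIV \<inter> {x. A x = 0}) + cdim (A ` UNIV)"
    by (rule rank_nullity_le[OF linA']) simp
  then have le: "cdim (UNIV :: ('n \<Rightarrow> complex) set) \<le> cdim K + cdim R" by (simp add: K_def R_def)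
  have "cdim {x + y |x y. x \<in> K \<and> y \<in> R} + cdim (K \<inter> R) = cdim K + cdim R"
    by (rule cvs.dim_sums_Int[OF Ksub Rsub])
  moreover have "cdim (K \<inter> R) = 0" using KR cvs.dim_eq_0 by blast
  ultimately have "cdim (UNIV :: ('n \<Rightarrow> complex) set) \<le> cdim {x + y |x y. x \<in> K \<and> y \<in> R}"
    using le by simp
  then have full: "{x + y |x y. x \<in> K \<and> y \<in> R} = UNIV"
    using cvs.subspace_dim_equal[OF cvs.subspace_sums[OF Ksub Rsub] cvs.subspace_UNIV] by blast
  have dec: "\<exists>k z. y = k + A z \<and> A k = 0" for y
  proof -
    have "y \<in> {x + y |x y. x \<in> K \<and> y \<in> R}" using full by simp
    then show ?thesis by (auto simp: K_def R_def)
  qed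
  define P where "P y v \<longleftrightarrow> v \<in> range A \<and> A (y - A v) = 0" for y v
  have ex: "\<exists>v. P y v" for y
  proof -
    obtain k z where kz: "y = k + A z" "A k = 0" using dec by blast
    obtain k' z' where kz': "z = k' + A z'" "A k' = 0" using dec by blast
    have "A z = A (A z')" using kz' lin_add[OF linA] by simp
    then have "P y (A z')" using kz by (simp add: P_def lin_diff[OF linA])
    then show ?thesis by blast
  qed
  have uniq: "v = v'" if hv: "P y v" "P y v'" for y v v'
  proof -
    have "A (A v - A v') = 0"
    proof -
      have "A v - A v' = (y - A v') - (y - A v)" by simp
      then show ?thesis using hv lin_diff[OF linA] by (simp add: P_def)
    qed
    moreover have "A v - A v' \<in> R" using lin_diff[OF linA, of v v'] unfolding R_def by (metis rangeI)
    ultimately have "A v - A v' = 0" using KR by (auto simp: K_def)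
    then have "A (v - v') = 0" by (simp add: lin_diff[OF linA])
    moreover have "v - v' \<in> R"
    proof -
      obtain a b where "v = A a" "v' = A b" using hv unfolding P_def by blast
      then show ?thesis using lin_diff[OF linA, of a b] unfolding R_def by (metis rangeI)
    qed
    ultimately show "v = v'" using KR by (auto simp: K_def)
  qed
  define G where "G y = (THE v. P y v)" for y
  have PG: "P y (G y)" for y unfolding G_def using ex uniq by (metis theI)
  have Geq: "P y v \<Longrightarrow> G y = v" for y v using PG uniq by blast
  have linG: "lin G"
    unfolding lin_def
  proof (intro conjI allI)
    fix x y
    show "G (x + y) = G x + G y"
    proof (rule Geq)
      have "G x \<in> range A" "G y \<in> range A" using PG by (auto simp: P_def)
      then obtain a b where ab: "G x = A a" "G y = A b" by blast
      have h: "A (x - A (G x)) = 0" "A (y - A (G y)) = 0" using PG by (auto simp: P_def)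
      have e: "x + y - A (G x + G y) = (x - A (G x)) + (y - A (G y))"
        by (simp add: lin_add[OF linA])
      have "A (x + y - A (G x + G y)) = 0" by (subst e) (simp add: lin_add[OF linA] h)
      moreover have "G x + G y \<in> range A" using ab lin_add[OF linA, of a b] by (metis rangeI)
      ultimately show "P (x + y) (G x + G y)" by (simp add: P_def)
    qed
  next
    fix c x
    show "G (cscale c x) = cscale c (G x)"
    proof (rule Geq)
      have "G x \<in> range A" using PG by (auto simp: P_def)
      then obtain a where a: "G x = A a" by blast
      have h: "A (x - A (G x)) = 0" using PG by (auto simp: P_def)
      have e: "cscale c x - A (cscale c (G x)) = cscale c (x - A (G x))"
        by (simp add: lin_sc[OF linA])
      have "A (cscale c x - A (cscale c (G x))) = 0" by (subst e, subst lin_sc[OF linA], simp only: h cscale_simps)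
      moreover have "cscale c (G x) \<in> range A" using a lin_sc[OF linA, of c a] by (metis rangeI)
      ultimately show "P (cscale c x) (cscale c (G x))" by (simp add: P_def)
    qed
  qed
  have AGA: "A (G (A x)) = A x" for x
  proof -
    have "A (A x - A (G (A x))) = 0" using PG by (simp add: P_def)
    moreover have "A x - A (G (A x)) \<in> R" using lin_diff[OF linA, of x "G (A x)"] unfolding R_def by (metis rangeI)
    ultimately have "A x - A (G (A x)) = 0" using KR by (auto simp: K_def)
    then show ?thesis by simp
  qed
  have GAG: "G (A (G x)) = G x" for x
    by (rule Geq) (use PG in \<open>auto simp: P_def lin_0[OF linA]\<close>)
  have comm: "A (G x) = G (A x)" for x
  proof -
    have "P (A x) (A (G x))"
    proof -
      have "A (x - A (G x)) = 0" using PG by (simp add: P_def)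
      then have "A (A x - A (A (G x))) = 0" using lin_diff[OF linA] lin_0[OF linA] by metis
      then show ?thesis by (auto simp: P_def)
    qed
    then show ?thesis using Geq by metis
  qed
  show ?thesis using linG AGA GAG comm by blast
qed

lemma lie_add1: "lie_algebra br \<Longrightarrow> br (x + y) z = br x z + br y z" unfolding lie_algebra_def by blast
lemma lie_sc1: "lie_algebra br \<Longrightarrow> br (cscale c x) z = cscale c (br x z)" unfolding lie_algebra_def by blast
lemma lie_add2: "lie_algebra br \<Longrightarrow> br x (y + z) = br x y + br x z" unfolding lie_algebra_def by blast
lemma lie_sc2: "lie_algebra br \<Longrightarrow> br x (cscale c z) = cscale c (br x z)" unfolding lie_algebra_def by blast
lemma lie_alt: "lie_algebra br \<Longrightarrow> br x x = 0" unfolding lie_algebra_def by blast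
lemma lie_jac: "lie_algebra br \<Longrightarrow> br x (br y z) + br y (br z x) + br z (br x y) = 0"
  unfolding lie_algebra_def by blast

lemma lie_lin_right: "lie_algebra br \<Longrightarrow> lin (br x)"
  by (simp add: lin_def lie_add2 lie_sc2)

lemma lie_lin_left: "lie_algebra br \<Longrightarrow> lin (\<lambda>x. br x y)"
  by (simp add: lin_def lie_add1 lie_sc1)

lemma lie_antisym: assumes "lie_algebra br" shows "br x y = - br y x"
proof -
  have "br (x + y) (x + y) = 0" by (rule lie_alt[OF assms])
  moreover have "br (x + y) (x + y) = br x x + br x y + (br y x + br y y)"
    by (simp add: lie_add1[OF assms] lie_add2[OF assms])
  ultimately have "br x y + br y x = 0" by (simp add: lie_alt[OF assms])
  then show ?thesis by (simp add: eq_neg_iff_add_eq_0)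
qed

lemma lie_jacobi: assumes "lie_algebra br"
  shows "br x (br y z) = br (br x y) z + br y (br x z)"
proof -
  have J: "br x (br y z) + br y (br z x) + br z (br x y) = 0" by (rule lie_jac[OF assms])
  have a0: "br z x = - br x z" by (rule lie_antisym[OF assms])
  have a1: "br y (br z x) = - br y (br x z)"
    unfolding a0 by (rule lin_neg[OF lie_lin_right[OF assms]])
  have a2: "br z (br x y) = - br (br x y) z" by (rule lie_antisym[OF assms])
  from J have "br x (br y z) - br y (br x z) - br (br x y) z = 0" unfolding a1 a2 by (simp add: algebra_simps)
  then show ?thesis by (simp add: algebra_simps)
qed

lemma sl2_from_triple:
  assumes L: "lie_algebra br" and T: "sl2_triple br e h f"
  shows "sl2 (br h) (br e) (br f)"
proof
  show "lin (br h)" "lin (br e)" "lin (br f)" using lie_lin_right[OF L] by auto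
  have he: "br h e = cscale 2 e" and hf: "br h f = cscale (-2) f" and ef: "br e f = h"
    using T by (auto simp: sl2_triple_def)
  have sc: "br (cscale c u) x = cscale c (br u x)" for c u x using L unfolding lie_algebra_def by blast
  fix x
  show "br h (br e x) = br e (br h x) + cscale 2 (br e x)"
    using lie_jacobi[OF L, of h e x] by (simp add: he sc algebra_simps)
  show "br h (br f x) = br f (br h x) - cscale 2 (br f x)"
  proof -
    have "br (br h f) x = br (cscale (-2) f) x" by (simp only: hf)
    also have "\<dots> = cscale (-2) (br f x)" by (rule sc)
    also have "\<dots> = - cscale 2 (br f x)" by (simp add: cscale_def fun_eq_iff uminus_apply)
    finally have "br (br h f) x = - cscale 2 (br f x)" .
    then show ?thesis using lie_jacobi[OF L, of h f x] by (simp add: algebra_simps)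
  qed
  show "br e (br f x) - br f (br e x) = br h x"
    using lie_jacobi[OF L, of e f x] by (simp add: ef)
qed

lemma foldr_replicate: "foldr br (replicate k h) y = (br h ^^ k) y"
  by (induct k) auto

theorem LA_main:
  fixes br :: "('n::finite \<Rightarrow> complex) \<Rightarrow> ('n \<Rightarrow> complex) \<Rightarrow> ('n \<Rightarrow> complex)"
  assumes "semisimple br" and "cartan_subalgebra br H" and "principal_sl2_triple br H e h f"
    and "h \<in> H"
  shows "lin (br h) \<and> {x. br h x = 0} = H \<and>
    (\<exists>G. lin G \<and> (\<forall>x. br h (G x) = G (br h x)) \<and> (\<forall>x. br h (G (br h x)) = br h x) \<and> (\<forall>x. G (br h (G x)) = G x))"
proof -
  have L: "lie_algebra br" using assms(1) by (simp add: semisimple_def)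
  have T: "sl2_triple br e h f" using assms(3) by (simp add: principal_sl2_triple_def)
  interpret s: sl2 "br h" "br e" "br f" by (rule sl2_from_triple[OF L T])
  have linA: "lin (br h)" by (rule s.linA)
  have powk: "(br h ^^ k) y = 0 \<Longrightarrow> br h y = 0" for k y
  proof (induct k arbitrary: y)
    case 0 then show ?case using lin_0[OF linA] by simp
  next
    case (Suc k)
    have "(br h ^^ k) (br h y) = 0" using Suc(2) by (metis funpow_Suc_right comp_apply)
    then have "br h (br h y) = 0" using Suc(1) by blast
    then show ?case by (rule s.ker_sq)
  qed
  have Hsub: "csubspace H" using assms(2) by (simp add: cartan_subalgebra_def lie_subalgebra_def)
  obtain k where k: "\<forall>xs y. set xs \<subseteq> H \<and> length xs = k \<and> y \<in> H \<longrightarrow> foldr br xs y = 0"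
    using assms(2) by (auto simp: cartan_subalgebra_def nilpotent_sub_def)
  have HK: "H \<subseteq> {x. br h x = 0}"
  proof
    fix y assume y: "y \<in> H"
    have "set (replicate k h) \<subseteq> H \<and> length (replicate k h) = k \<and> y \<in> H" using y assms(4) by auto
    then have "foldr br (replicate k h) y = 0" using k by blast
    then show "y \<in> {x. br h x = 0}" using powk by (simp add: foldr_replicate)
  qed
  have "cdim {x. br h x = 0} \<le> cdim {x. br e x = 0}" by (rule s.ker_dim)
  also have "{x. br e x = 0} = centralizer br e" by (simp add: centralizer_def)
  also have "cdim (centralizer br e) = cdim H" using assms(3) by (simp add: principal_sl2_triple_def)
  finally have "cdim {x. br h x = 0} \<le> cdim H" .
  then have eq: "H = {x. br h x = 0}"
    using cvs.subspace_dim_equal[OF Hsub lin_subspace_kernel[OF linA] HK] by blast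
  show ?thesis using eq linA group_inverse[OF linA s.ker_sq] by auto
qed





abbreviation lk where "lk \<equiv> Poly_Mapping.lookup"
abbreviation sg where "sg \<equiv> Poly_Mapping.single"
abbreviation ks where "ks \<equiv> Poly_Mapping.keys"

declare One_nat_def[simp del]

type_synonym 'n mono = "('n \<times> nat) \<Rightarrow>\<^sub>0 nat"

lemma lookup_minus_nat: "lk (f - g) k = lk f k - (lk g k :: nat)"
  by transfer simp

lemma poly_sum_single: "(P :: 'a \<Rightarrow>\<^sub>0 'b::comm_monoid_add) = (\<Sum>\<mu>\<in>ks P. sg \<mu> (lk P \<mu>))"
proof (rule poly_mapping_eqI)
  fix \<nu>
  have "lk (\<Sum>\<mu>\<in>ks P. sg \<mu> (lk P \<mu>)) \<nu> = (\<Sum>\<mu>\<in>ks P. (lk P \<mu> when \<mu> = \<nu>))"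
    by (simp add: lookup_sum lookup_single)
  also have "\<dots> = lk P \<nu>"
  proof (cases "\<nu> \<in> ks P")
    case True
    then show ?thesis by (simp add: when_def sum.delta)
  next
    case False
    then have "(\<Sum>\<mu>\<in>ks P. (lk P \<mu> when \<mu> = \<nu>)) = 0"
      by (intro sum.neutral) (auto simp: when_def)
    then show ?thesis using False by (simp add: in_keys_iff)
  qed
  finally show "lk P \<nu> = lk (\<Sum>\<mu>\<in>ks P. sg \<mu> (lk P \<mu>)) \<nu>" by simp
qed

lemma poly_induct_add [case_names single add]:
  fixes P :: "'a \<Rightarrow>\<^sub>0 'b::comm_monoid_add"
  assumes "\<And>\<mu> c. Q (sg \<mu> c)" "\<And>P R. Q P \<Longrightarrow> Q R \<Longrightarrow> Q (P + R)"
  shows "Q P"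
proof -
  have Q0: "Q 0" using assms(1)[of _ 0] by simp
  have "Q (\<Sum>\<mu>\<in>S. sg \<mu> (lk P \<mu>))" if "finite S" for S
    using that by (induct S rule: finite_induct) (auto simp: Q0 assms)
  then show ?thesis using poly_sum_single[of P] by (metis finite_keys)
qed

lemma update_eq_add: "a \<notin> ks f \<Longrightarrow> Poly_Mapping.update a b f = f + sg a (b :: 'b :: monoid_add)"
  by (rule poly_mapping_eqI) (auto simp: lookup_update lookup_add lookup_single when_def in_keys_iff)

abbreviation pvar :: "'v \<Rightarrow> ('v \<Rightarrow>\<^sub>0 nat) \<Rightarrow>\<^sub>0 complex" where
  "pvar v \<equiv> sg (sg v 1) 1"

lemma single_single_Suc: "sg (sg v (Suc b)) (1::complex) = sg (sg v b) 1 * pvar v"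
  by (simp add: mult_single single_add[symmetric] One_nat_def)

lemma poly_induct [case_names const var add mult]:
  fixes P :: "('v \<Rightarrow>\<^sub>0 nat) \<Rightarrow>\<^sub>0 complex"
  assumes const: "\<And>c. Q (sg 0 c)" and var: "\<And>v. Q (pvar v)"
    and add: "\<And>P R. Q P \<Longrightarrow> Q R \<Longrightarrow> Q (P + R)" and mult: "\<And>P R. Q P \<Longrightarrow> Q R \<Longrightarrow> Q (P * R)"
  shows "Q P"
proof -
  have pw: "Q (sg (sg v b) 1)" for v b
  proof (induct b)
    case 0 then show ?case using const[of 1] by simp
  next
    case (Suc b) then show ?case using var mult single_single_Suc by metis
  qed
  have mono: "Q (sg \<mu> 1)" for \<mu> :: "'v \<Rightarrow>\<^sub>0 nat"
  proof (induct \<mu> rule: update_induct)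
    case const then show ?case using assms(1)[of 1] by simp
  next
    case (update f a b)
    have "sg (Poly_Mapping.update a b f) (1::complex) = sg f 1 * sg (sg a b) 1"
      using update(1) by (simp add: update_eq_add mult_single)
    then show ?case using update(3) pw mult by metis
  qed
  show ?thesis
  proof (induct P rule: poly_induct_add)
    case (single \<mu> c)
    have "sg \<mu> c = sg 0 c * sg \<mu> (1::complex)" by (simp add: mult_single)
    then show ?case using mult const mono by metis
  next
    case (add P R) then show ?case using assms(3) by blast
  qed
qed

lemma mono_add_diff:
  fixes \<mu> \<nu> :: "'v \<Rightarrow>\<^sub>0 nat"
  assumes "lk \<mu> v \<ge> 1"
  shows "\<mu> - sg v 1 + \<nu> = \<mu> + \<nu> - sg v 1"
  using assms by (intro poly_mapping_eqI) (auto simp: lookup_add lookup_minus_nat lookup_single when_def)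

lemma mono_diff_add:
  fixes \<mu> :: "'v \<Rightarrow>\<^sub>0 nat"
  assumes "lk \<mu> v \<ge> 1"
  shows "\<mu> - sg v 1 + sg v 1 = \<mu>"
  using assms by (intro poly_mapping_eqI) (auto simp: lookup_add lookup_minus_nat lookup_single when_def)

lemma pderiv_single: "pderiv_var v (sg \<mu> a) = sg (\<mu> - sg v 1) (of_nat (lk \<mu> v) * a)"
  by (cases "a = 0") (simp_all add: pderiv_var_def)

lemma lookup_pderiv:
  "lk (pderiv_var v P) \<nu> = of_nat (lk \<nu> v + 1) * lk P (\<nu> + sg v 1)"
proof -
  define e where "e = sg v (1::nat)"
  define \<mu>0 where "\<mu>0 = \<nu> + e"
  define c where "c \<mu> = of_nat (lk \<mu> v) * lk P \<mu>" for \<mu>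
  have "lk (pderiv_var v P) \<nu> = (\<Sum>\<mu>\<in>ks P. (c \<mu> when \<mu> - e = \<nu>))"
    by (simp add: pderiv_var_def lookup_sum lookup_single c_def e_def)
  also have "\<dots> = (\<Sum>\<mu>\<in>ks P. (if \<mu> = \<mu>0 then c \<mu>0 else 0))"
  proof (intro sum.cong refl)
    fix \<mu> assume "\<mu> \<in> ks P"
    show "(c \<mu> when \<mu> - e = \<nu>) = (if \<mu> = \<mu>0 then c \<mu>0 else 0)"
    proof (cases "\<mu> = \<mu>0")
      case True then show ?thesis by (simp add: \<mu>0_def when_def)
    next
      case False
      show ?thesis
      proof (cases "\<mu> - e = \<nu>")
        case True
        have "lk \<mu> v = 0"
        proof (rule ccontr)
          assume "lk \<mu> v \<noteq> 0"
          then have "\<mu> - e + e = \<mu>" using mono_diff_add[where \<mu>=\<mu> and v=v] by (simp add: e_def)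
          then show False using True False by (simp add: \<mu>0_def)
        qed
        then show ?thesis using False by (simp add: c_def when_def)
      next
        case False then show ?thesis using \<open>\<mu> \<noteq> \<mu>0\<close> by (simp add: when_def)
      qed
    qed
  qed
  also have "\<dots> = c \<mu>0"
    by (simp add: sum.delta c_def in_keys_iff)
  finally show ?thesis by (simp add: c_def \<mu>0_def e_def lookup_add)
qed

lemma pderiv_add: "pderiv_var v (P + Q) = pderiv_var v P + pderiv_var v Q"
  by (rule poly_mapping_eqI) (simp add: lookup_pderiv lookup_add algebra_simps)

lemma pderiv_zero [simp]: "pderiv_var v 0 = 0"
  by (simp add: pderiv_var_def)

lemma pderiv_sum: "pderiv_var v (sum f I) = (\<Sum>i\<in>I. pderiv_var v (f i))"
  by (induct I rule: infinite_finite_induct) (auto simp: pderiv_add)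

lemma pderiv_single_mult:
  "pderiv_var v (sg \<mu> a * sg \<nu> b) = pderiv_var v (sg \<mu> a) * sg \<nu> b + sg \<mu> a * pderiv_var v (sg \<nu> b)"
proof -
  define e where "e = sg v (1::nat)"
  have lhs: "pderiv_var v (sg \<mu> a * sg \<nu> b) = sg (\<mu> + \<nu> - e) (of_nat (lk \<mu> v + lk \<nu> v) * (a * b))"
    by (simp add: mult_single pderiv_single lookup_add e_def)
  have rhs: "pderiv_var v (sg \<mu> a) * sg \<nu> b + sg \<mu> a * pderiv_var v (sg \<nu> b)
      = sg (\<mu> - e + \<nu>) (of_nat (lk \<mu> v) * (a * b)) + sg (\<nu> - e + \<mu>) (of_nat (lk \<nu> v) * (a * b))"
    by (simp add: mult_single pderiv_single e_def algebra_simps)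
  have t1: "sg (\<mu> - e + \<nu>) (of_nat (lk \<mu> v) * (a * b)) = sg (\<mu> + \<nu> - e) (of_nat (lk \<mu> v) * (a * b))"
  proof (cases "lk \<mu> v = 0")
    case False
    then have "\<mu> - e + \<nu> = \<mu> + \<nu> - e" using mono_add_diff[where \<mu>=\<mu> and v=v and \<nu>=\<nu>] by (simp add: e_def)
    then show ?thesis by simp
  qed simp
  have t2: "sg (\<nu> - e + \<mu>) (of_nat (lk \<nu> v) * (a * b)) = sg (\<mu> + \<nu> - e) (of_nat (lk \<nu> v) * (a * b))"
  proof (cases "lk \<nu> v = 0")
    case False
    then have "\<nu> - e + \<mu> = \<mu> + \<nu> - e" using mono_add_diff[where \<mu>=\<nu> and v=v and \<nu>=\<mu>] by (simp add: e_def add.commute)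
    then show ?thesis by simp
  qed simp
  show ?thesis unfolding lhs rhs t1 t2 by (simp add: single_add[symmetric] algebra_simps)
qed

lemma pderiv_mult: "pderiv_var v (P * Q) = pderiv_var v P * Q + P * pderiv_var v Q"
proof (induct P rule: poly_induct_add)
  case (single \<mu> a)
  show ?case
  proof (induct Q rule: poly_induct_add)
    case (single \<nu> b) then show ?case by (rule pderiv_single_mult)
  next
    case (add Q R) then show ?case by (simp add: distrib_left pderiv_add algebra_simps)
  qed
next
  case (add P R) then show ?case by (simp add: distrib_right pderiv_add algebra_simps)
qed


lemma vars_finite: "finite (vars P)"
  by (simp add: vars_def)

lemma in_vars: "v \<in> vars P \<longleftrightarrow> (\<exists>\<mu>\<in>ks P. v \<in> ks \<mu>)"
  by (auto simp: vars_def)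

lemma pderiv_notvar: "v \<notin> vars P \<Longrightarrow> pderiv_var v P = 0"
  unfolding pderiv_var_def by (intro sum.neutral) (auto simp: in_vars in_keys_iff)

lemma keys_add_nat: "ks (\<mu> + \<nu>) = ks \<mu> \<union> ks (\<nu> :: 'v \<Rightarrow>\<^sub>0 nat)"
  by (auto simp: in_keys_iff lookup_add)

lemma vars_add: "vars (P + Q) \<subseteq> vars P \<union> vars Q"
  using keys_add[of P Q] by (auto simp: vars_def)

lemma vars_mult: "vars (P * Q) \<subseteq> vars P \<union> vars Q"
proof
  fix v assume "v \<in> vars (P * Q)"
  then obtain \<mu> where "\<mu> \<in> ks (P * Q)" "v \<in> ks \<mu>" by (auto simp: vars_def)
  then obtain a b where "a \<in> ks P" "b \<in> ks Q" "\<mu> = a + b" using keys_mult[of P Q] by blast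
  then show "v \<in> vars P \<union> vars Q" using \<open>v \<in> ks \<mu>\<close> by (auto simp: vars_def keys_add_nat)
qed

lemma vars_pderiv: "vars (pderiv_var v P) \<subseteq> vars P"
proof
  fix w assume "w \<in> vars (pderiv_var v P)"
  then obtain \<mu> where \<mu>: "\<mu> \<in> ks (pderiv_var v P)" "w \<in> ks \<mu>" by (auto simp: vars_def)
  then have "lk P (\<mu> + sg v 1) \<noteq> 0" by (simp add: in_keys_iff lookup_pderiv)
  then have "\<mu> + sg v 1 \<in> ks P" by (simp add: in_keys_iff)
  moreover have "w \<in> ks (\<mu> + sg v 1)" using \<mu>(2) by (simp add: keys_add_nat)
  ultimately show "w \<in> vars P" by (auto simp: vars_def)
qed

lemma vars_const [simp]: "vars (sg 0 c) = {}"
  by (simp add: vars_def)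

lemma vars_var [simp]: "vars (pvar v) = {v}"
  by (simp add: vars_def)

lemma vars_zero [simp]: "vars 0 = {}"
  by (simp add: vars_def)

lemma pderiv_const [simp]: "pderiv_var v (sg 0 c) = 0"
  by (simp add: pderiv_single)

lemma pderiv_var_same: "pderiv_var v (pvar v) = 1"
  by (simp add: pderiv_single)

definition Der :: "(('n \<times> nat) \<Rightarrow> 'n Spoly) \<Rightarrow> 'n Spoly \<Rightarrow> 'n Spoly" where
  "Der M P = (\<Sum>v\<in>vars P. pderiv_var v P * M v)"

lemma Der_eq: "finite S \<Longrightarrow> vars P \<subseteq> S \<Longrightarrow> Der M P = (\<Sum>v\<in>S. pderiv_var v P * M v)"
  unfolding Der_def by (rule sum.mono_neutral_left) (auto simp: pderiv_notvar)

lemma Der_add: "Der M (P + Q) = Der M P + Der M Q"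
proof -
  define S where "S = vars P \<union> vars Q"
  have f: "finite S" by (simp add: S_def vars_finite)
  have "Der M (P + Q) = (\<Sum>v\<in>S. pderiv_var v (P + Q) * M v)"
    using vars_add[of P Q] by (intro Der_eq f) (auto simp: S_def)
  also have "\<dots> = (\<Sum>v\<in>S. pderiv_var v P * M v) + (\<Sum>v\<in>S. pderiv_var v Q * M v)"
    by (simp add: pderiv_add distrib_right sum.distrib)
  also have "\<dots> = Der M P + Der M Q"
    using f Der_eq[of S P M] Der_eq[of S Q M] by (simp add: S_def)
  finally show ?thesis .
qed

lemma Der_zero [simp]: "Der M 0 = 0"
  by (simp add: Der_def)

lemma Der_sum: "Der M (sum f I) = (\<Sum>i\<in>I. Der M (f i))"
  by (induct I rule: infinite_finite_induct) (auto simp: Der_add)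

lemma Der_mult: "Der M (P * Q) = Der M P * Q + P * Der M Q"
proof -
  define S where "S = vars P \<union> vars Q"
  have f: "finite S" by (simp add: S_def vars_finite)
  have "Der M (P * Q) = (\<Sum>v\<in>S. pderiv_var v (P * Q) * M v)"
    using vars_mult[of P Q] by (intro Der_eq f) (auto simp: S_def)
  also have "\<dots> = (\<Sum>v\<in>S. pderiv_var v P * M v) * Q + P * (\<Sum>v\<in>S. pderiv_var v Q * M v)"
    by (simp add: pderiv_mult algebra_simps sum.distrib sum_distrib_left sum_distrib_right)
  also have "\<dots> = Der M P * Q + P * Der M Q"
    using f Der_eq[of S P M] Der_eq[of S Q M] by (simp add: S_def)
  finally show ?thesis .
qed

lemma Der_const [simp]: "Der M (sg 0 c) = 0"
  by (simp add: Der_def)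

lemma Der_var [simp]: "Der M (pvar v) = M v"
  by (simp add: Der_def pderiv_var_same)

lemma Der_smult: "Der M (sg 0 c * P) = sg 0 c * Der M P"
  by (simp add: Der_mult)

lemma Der_neg: "Der M (- P) = - Der M P"
  using Der_add[of M P "- P"] by (simp add: eq_neg_iff_add_eq_0 add.commute)

lemma Der_diff: "Der M (P - Q) = Der M P - Der M Q"
  using Der_add[of M P "- Q"] Der_neg[of M Q] by simp

lemma Der_comm: "Der M (Der N P) = Der N (Der M P) + Der (\<lambda>v. Der M (N v) - Der N (M v)) P"
proof (induct P rule: poly_induct)
  case (const c) then show ?case by simp
next
  case (var v) then show ?case by simp
next
  case (add P R) then show ?case by (simp add: Der_add)
next
  case (mult P R)
  then show ?case by (simp add: Der_mult Der_add algebra_simps)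
qed

type_synonym 'v pol = "('v \<Rightarrow>\<^sub>0 nat) \<Rightarrow>\<^sub>0 complex"

lemma lookup_smult: "lk (sg 0 a * (P :: 'v pol)) \<mu> = a * lk P \<mu>"
proof (induct P rule: poly_induct_add)
  case (single \<nu> c) then show ?case by (simp add: mult_single lookup_single when_def)
next
  case (add P R) then show ?case by (simp add: distrib_left lookup_add)
qed

lemma smult_eq_0: "sg 0 a * (P :: 'v pol) = 0 \<Longrightarrow> a \<noteq> 0 \<Longrightarrow> P = 0"
proof (rule poly_mapping_eqI)
  fix \<mu> assume h: "sg 0 a * P = 0" "a \<noteq> 0"
  have "a * lk P \<mu> = 0" using lookup_smult[of a P \<mu>] h(1) by simp
  then show "lk P \<mu> = lk 0 \<mu>" using h(2) by simp
qed

lemma smult_smult: "sg 0 a * (sg 0 b * (P :: 'v pol)) = sg 0 (a * b) * P"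
  by (simp add: mult.assoc[symmetric] mult_single)

lemma smult_one: "sg 0 1 * (P :: 'v pol) = P" by simp

lemma smult_add_left: "sg 0 (a + b) * (P :: 'v pol) = sg 0 a * P + sg 0 b * P"
  by (simp add: single_add distrib_right)

lemma smult_diff_left: "sg 0 (a - b) * (P :: 'v pol) = sg 0 a * P - sg 0 b * P"
  by (simp add: single_diff left_diff_distrib)

lemma loopv_alt: "loopv x k = (\<Sum>i\<in>UNIV. sg 0 (x i) * pvar (i, k))"
  by (simp add: loopv_def mult_single)

lemma loopv_add: "loopv (x + y) k = loopv x k + loopv y k"
  by (simp add: loopv_def plus_fun_apply single_add sum.distrib)

lemma loopv_smult: "loopv (cscale c x) k = sg 0 c * loopv x k"
  by (simp add: loopv_alt cscale_def sum_distrib_left smult_smult)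

lemma loopv_zero [simp]: "loopv 0 k = 0"
  by (simp add: loopv_def zero_fun_apply)

lemma loopv_neg: "loopv (- x) k = - loopv x k"
  using loopv_add[of x "- x" k] by (simp add: eq_neg_iff_add_eq_0 add.commute)

lemma loopv_diff: "loopv (x - y) k = loopv x k - loopv y k"
  using loopv_add[of x "- y" k] loopv_neg[of y k] by simp

lemma loopv_sum: "loopv (sum f I) k = (\<Sum>i\<in>I. loopv (f i) k)"
  by (induct I rule: infinite_finite_induct) (auto simp: loopv_add)

lemma vec_expand: "(x :: 'n::finite \<Rightarrow> complex) = (\<Sum>i\<in>UNIV. cscale (x i) (basisv i))"
  by (auto simp: fun_eq_iff cscale_def basisv_def sum_apply if_distrib sum.delta sum.delta' cong: if_cong)

lemma lin_expand:
  fixes T :: "('n::finite \<Rightarrow> complex) \<Rightarrow> ('m \<Rightarrow> complex)"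
  assumes "lin T" shows "T x = (\<Sum>i\<in>UNIV. cscale (x i) (T (basisv i)))"
proof -
  have "T x = T (\<Sum>i\<in>UNIV. cscale (x i) (basisv i))" by (rule arg_cong[where f=T, OF vec_expand])
  then show ?thesis by (simp add: lin_sum[OF assms] lin_sc[OF assms])
qed

lemma loopv_basis: "loopv (basisv i) k = pvar (i, k)"
proof -
  have "loopv (basisv i) k = (\<Sum>j\<in>UNIV. (if j = i then pvar (i, k) else 0))"
    unfolding loopv_def by (intro sum.cong) (auto simp: basisv_def)
  then show ?thesis by simp
qed

lemma Der_loopv: "Der M (loopv x k) = (\<Sum>i\<in>UNIV. sg 0 (x i) * M (i, k))"
  by (simp add: loopv_alt Der_sum Der_smult)

definition Mop :: "(('n::finite \<Rightarrow> complex) \<Rightarrow> ('n \<Rightarrow> complex)) \<Rightarrow> (nat \<Rightarrow> complex) \<Rightarrow> (nat \<Rightarrow> nat) \<Rightarrow> ('n \<times> nat) \<Rightarrow> 'n Spoly" where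
  "Mop T \<phi> \<psi> v = sg 0 (\<phi> (snd v)) * loopv (T (basisv (fst v))) (\<psi> (snd v))"

lemma Der_Mop_loopv:
  assumes "lin T"
  shows "Der (Mop T \<phi> \<psi>) (loopv x k) = sg 0 (\<phi> k) * loopv (T x) (\<psi> k)"
proof -
  have "Der (Mop T \<phi> \<psi>) (loopv x k) = (\<Sum>i\<in>UNIV. sg 0 (x i) * (sg 0 (\<phi> k) * loopv (T (basisv i)) (\<psi> k)))"
    by (simp add: Der_loopv Mop_def)
  also have "\<dots> = sg 0 (\<phi> k) * (\<Sum>i\<in>UNIV. loopv (cscale (x i) (T (basisv i))) (\<psi> k))"
    by (simp add: sum_distrib_left loopv_smult algebra_simps)
  also have "\<dots> = sg 0 (\<phi> k) * loopv (T x) (\<psi> k)"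
    by (simp add: loopv_sum[symmetric] lin_expand[OF assms, symmetric])
  finally show ?thesis .
qed

lemma Der_Mop_Mop:
  assumes "lin T1"
  shows "Der (Mop T1 \<phi>1 \<psi>1) (Mop T2 \<phi>2 \<psi>2 (i, k)) =
    sg 0 (\<phi>2 k * \<phi>1 (\<psi>2 k)) * loopv (T1 (T2 (basisv i))) (\<psi>1 (\<psi>2 k))"
  by (simp add: Mop_def Der_smult Der_Mop_loopv[OF assms] smult_smult)

lemma Der_cong: "(\<And>v. M v = M' v) \<Longrightarrow> Der M P = Der M' P"
  by (simp add: Der_def)

lemma Der_zero_fun: "Der (\<lambda>v. 0) P = 0"
  by (simp add: Der_def)

lemma Der_minus_fun: "Der (\<lambda>v. - M v) P = - Der M P"
  by (simp add: Der_def sum_negf)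


definition eig :: "(('n \<times> nat) \<Rightarrow> 'n Spoly) \<Rightarrow> complex \<Rightarrow> 'n Spoly \<Rightarrow> bool" where
  "eig M c Q \<longleftrightarrow> Der M Q = sg 0 c * Q"

lemma eig_zero [simp]: "eig M c 0" by (simp add: eig_def)

lemma eig_add: "eig M c Q \<Longrightarrow> eig M c R \<Longrightarrow> eig M c (Q + R)"
  by (simp add: eig_def Der_add distrib_left)

lemma eig_sum: "(\<And>i. i \<in> I \<Longrightarrow> eig M c (f i)) \<Longrightarrow> eig M c (sum f I)"
  by (induct I rule: infinite_finite_induct) (auto intro: eig_add)

lemma eig_mult: assumes "eig M a Q" "eig M b R" shows "eig M (a + b) (Q * R)"
proof -
  have "Der M (Q * R) = (sg 0 a * Q) * R + Q * (sg 0 b * R)" using assms by (simp add: eig_def Der_mult)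
  also have "\<dots> = sg 0 a * (Q * R) + sg 0 b * (Q * R)" by (simp only: mult.assoc mult.left_commute[of Q])
  also have "\<dots> = sg 0 (a + b) * (Q * R)" by (simp add: smult_add_left)
  finally show ?thesis by (simp add: eig_def)
qed

lemma eig_smult: assumes "eig M c Q" shows "eig M c (sg 0 a * Q)"
proof -
  have "Der M (sg 0 a * Q) = sg 0 a * (sg 0 c * Q)" using assms by (simp add: eig_def Der_smult)
  also have "\<dots> = sg 0 c * (sg 0 a * Q)" by (rule mult.left_commute)
  finally show ?thesis by (simp add: eig_def)
qed

lemma eig_const: "eig M 0 (sg 0 c)" by (simp add: eig_def)

lemma eig_indep:
  assumes "finite I" "inj_on c I" "\<And>i. i \<in> I \<Longrightarrow> eig M (c i) (g i)" "(\<Sum>i\<in>I. g i) = 0"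
  shows "\<forall>i\<in>I. g i = 0"
  using assms
proof (induct I arbitrary: g rule: finite_induct)
  case empty then show ?case by simp
next
  case (insert a I)
  define T where "T Q = Der M Q - sg 0 (c a) * Q" for Q
  have Tadd: "T (Q + R) = T Q + T R" for Q R by (simp add: T_def Der_add algebra_simps)
  have T0: "T 0 = 0" by (simp add: T_def)
  have Tsum: "T (sum f J) = (\<Sum>j\<in>J. T (f j))" for f and J :: "'a set"
    by (induct J rule: infinite_finite_induct) (simp_all add: Tadd T0)
  have Tg: "T (g i) = sg 0 (c i - c a) * g i" if "i \<in> insert a I" for i
    using insert(5)[OF that] by (simp add: T_def eig_def smult_diff_left)
  have "T (\<Sum>i\<in>insert a I. g i) = 0" using insert(6) by (simp add: T_def)
  then have "(\<Sum>i\<in>I. sg 0 (c i - c a) * g i) = 0"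
    using insert(1,2) Tsum[of g "insert a I"] Tg by simp
  moreover have "eig M (c i) (sg 0 (c i - c a) * g i)" if "i \<in> I" for i
    using insert(5) that by (auto intro: eig_smult)
  ultimately have "\<forall>i\<in>I. sg 0 (c i - c a) * g i = 0"
    using insert(3)[of "\<lambda>i. sg 0 (c i - c a) * g i"] insert(4) by (auto simp: inj_on_insert)
  moreover have "c i - c a \<noteq> 0" if "i \<in> I" for i
    using insert(2,4) that by (auto simp: inj_on_def)
  ultimately have zI: "\<forall>i\<in>I. g i = 0" using smult_eq_0 by blast
  then have "g a = 0" using insert(1,2,6) by simp
  then show ?case using zI by simp
qed

definition eigdec :: "(('n \<times> nat) \<Rightarrow> 'n Spoly) \<Rightarrow> 'n Spoly set \<Rightarrow> 'n Spoly \<Rightarrow> bool" where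
  "eigdec M Z P \<longleftrightarrow> (\<exists>f m. P = (\<Sum>d\<le>m. f d) \<and> (\<forall>d. eig M (of_nat d) (f d)) \<and> f 0 \<in> Z \<and> (\<forall>d>m. f d = 0))"

lemma eigdec_extend:
  assumes "\<forall>d>m. f d = 0" "m \<le> (m'::nat)"
  shows "(\<Sum>d\<le>m'. f d) = (\<Sum>d\<le>m. f d)"
proof (rule sum.mono_neutral_right)
  show "finite {..m'}" by simp
  show "{..m} \<subseteq> {..m'}" using assms(2) by auto
  show "\<forall>i\<in>{..m'} - {..m}. f i = 0" using assms(1) by auto
qed

lemma eigdecI:
  assumes "P = (\<Sum>d\<le>m. f d)" "\<And>d. eig M (of_nat d) (f d)" "f 0 \<in> Z"
  shows "eigdec M Z P"
proof -
  define f' where "f' d = (if d \<le> m then f d else 0)" for d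
  have "P = (\<Sum>d\<le>m. f' d)" using assms(1) by (simp add: f'_def)
  moreover have "\<forall>d. eig M (of_nat d) (f' d)" using assms(2) by (simp add: f'_def)
  moreover have "f' 0 \<in> Z" using assms(3) by (simp add: f'_def)
  moreover have "\<forall>d>m. f' d = 0" by (simp add: f'_def)
  ultimately show ?thesis unfolding eigdec_def by blast
qed

lemma eigdec_add:
  assumes "eigdec M Z P" "eigdec M Z R" "\<And>a b. a \<in> Z \<Longrightarrow> b \<in> Z \<Longrightarrow> a + b \<in> Z"
  shows "eigdec M Z (P + R)"
proof -
  obtain f m where f: "P = (\<Sum>d\<le>m. f d)" "\<forall>d. eig M (of_nat d) (f d)" "f 0 \<in> Z" "\<forall>d>m. f d = 0"
    using assms(1) by (auto simp: eigdec_def)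
  obtain g m' where g: "R = (\<Sum>d\<le>m'. g d)" "\<forall>d. eig M (of_nat d) (g d)" "g 0 \<in> Z" "\<forall>d>m'. g d = 0"
    using assms(2) by (auto simp: eigdec_def)
  have "P + R = (\<Sum>d\<le>m + m'. f d + g d)"
    using eigdec_extend[OF f(4), of "m + m'"] eigdec_extend[OF g(4), of "m + m'"] f(1) g(1)
    by (simp add: sum.distrib)
  then show ?thesis using f g assms(3) by (intro eigdecI[where m="m+m'" and f="\<lambda>d. f d + g d"]) (auto intro: eig_add)
qed

lemma eigdec_mult:
  assumes "eigdec M Z P" "eigdec M Z R" "\<And>a b. a \<in> Z \<Longrightarrow> b \<in> Z \<Longrightarrow> a * b \<in> Z"
  shows "eigdec M Z (P * R)"
proof -
  obtain f m where f: "P = (\<Sum>d\<le>m. f d)" "\<forall>d. eig M (of_nat d) (f d)" "f 0 \<in> Z" "\<forall>d>m. f d = 0"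
    using assms(1) by (auto simp: eigdec_def)
  obtain g m' where g: "R = (\<Sum>d\<le>m'. g d)" "\<forall>d. eig M (of_nat d) (g d)" "g 0 \<in> Z" "\<forall>d>m'. g d = 0"
    using assms(2) by (auto simp: eigdec_def)
  define h where "h d = (\<Sum>a\<le>m. \<Sum>b\<le>m'. if a + b = d then f a * g b else 0)" for d
  have "P * R = (\<Sum>a\<le>m. \<Sum>b\<le>m'. f a * g b)"
    by (simp add: f(1) g(1) sum_distrib_left sum_distrib_right) (rule sum.swap)
  also have "\<dots> = (\<Sum>a\<le>m. \<Sum>b\<le>m'. \<Sum>d\<le>m + m'. if a + b = d then f a * g b else 0)"
  proof (intro sum.cong refl)
    fix a b assume "a \<in> {..m}" "b \<in> {..m'}"
    then have "a + b \<in> {..m + m'}" by auto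
    then show "f a * g b = (\<Sum>d\<le>m + m'. if a + b = d then f a * g b else 0)"
      by (simp add: sum.delta)
  qed
  also have "\<dots> = (\<Sum>a\<le>m. \<Sum>d\<le>m + m'. \<Sum>b\<le>m'. if a + b = d then f a * g b else 0)"
    by (rule sum.cong[OF refl], rule sum.swap)
  also have "\<dots> = (\<Sum>d\<le>m + m'. \<Sum>a\<le>m. \<Sum>b\<le>m'. if a + b = d then f a * g b else 0)"
    by (rule sum.swap)
  also have "\<dots> = (\<Sum>d\<le>m + m'. h d)" by (simp only: h_def)
  finally have PR: "P * R = (\<Sum>d\<le>m + m'. h d)" .
  have eh: "eig M (of_nat d) (h d)" for d
    unfolding h_def
  proof (intro eig_sum)
    fix a b
    show "eig M (of_nat d) (if a + b = d then f a * g b else 0)"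
      using eig_mult[OF f(2)[rule_format, of a] g(2)[rule_format, of b]] by auto
  qed
  have "h 0 = f 0 * g 0"
  proof -
    have "h 0 = (\<Sum>a\<le>m. if a = 0 then f 0 * g 0 else 0)"
      unfolding h_def by (intro sum.cong refl) (auto simp: sum.delta)
    then show ?thesis by (simp add: sum.delta)
  qed
  then have "h 0 \<in> Z" using f(3) g(3) assms(3) by simp
  then show ?thesis using PR eh by (intro eigdecI) auto
qed

lemma eigdec_all:
  assumes cZ: "\<And>c. sg 0 c \<in> Z"
    and addZ: "\<And>a b. a \<in> Z \<Longrightarrow> b \<in> Z \<Longrightarrow> a + b \<in> Z"
    and multZ: "\<And>a b. a \<in> Z \<Longrightarrow> b \<in> Z \<Longrightarrow> a * b \<in> Z"
    and varZ: "\<And>v. eigdec M Z (pvar v)"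
  shows "eigdec M Z P"
proof (induct P rule: poly_induct)
  case (const c)
  show ?case by (rule eigdecI[where m=0 and f="\<lambda>d. if d = 0 then sg 0 c else 0"]) (auto simp: cZ eig_const)
next
  case (var v) show ?case by (rule varZ)
next
  case (add P R) then show ?case using eigdec_add addZ by blast
next
  case (mult P R) then show ?case using eigdec_mult multZ by blast
qed

lemma eigdec_indep:
  assumes "(\<Sum>d\<le>m. g d) = 0" "\<And>d. d \<le> m \<Longrightarrow> eig M (of_nat d) (g d)"
  shows "\<forall>d\<le>m. g d = 0"
  using eig_indep[of "{..m}" "\<lambda>d. of_nat d" M g] assms by (auto simp: inj_on_def)


declare single_of_nat[simp del] single_numeral[simp del] single_of_int[simp del]

lemma Der_pow_add: "(Der M ^^ k) (P + Q) = (Der M ^^ k) P + (Der M ^^ k) Q"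
  by (induct k) (auto simp: Der_add)

lemma Der_pow_zero: "(Der M ^^ k) 0 = 0"
  by (induct k) auto

lemma Der_pow_sum: "(Der M ^^ k) (sum f I) = (\<Sum>i\<in>I. (Der M ^^ k) (f i))"
  by (induct I rule: infinite_finite_induct) (auto simp: Der_pow_add Der_pow_zero)

lemma Der_pow_smult: "(Der M ^^ k) (sg 0 c * P) = sg 0 c * (Der M ^^ k) P"
  by (induct k) (auto simp: Der_smult)

locale kd =
  fixes A G :: "('n::finite \<Rightarrow> complex) \<Rightarrow> ('n \<Rightarrow> complex)" and H :: "('n \<Rightarrow> complex) set"
  assumes linA: "lin A" and linG: "lin G"
    and AG: "\<And>x. A (G x) = G (A x)" and AGA: "\<And>x. A (G (A x)) = A x" and GAG: "\<And>x. G (A (G x)) = G x"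
    and Hker: "H = {x. A x = 0}"
begin

definition "pp x = A (G x)"

lemma linp: "lin pp" unfolding pp_def using lin_comp[OF linA linG] by simp
lemma Ap: "A (pp x) = A x" unfolding pp_def AG[of x] by (rule AGA)
lemma pA: "pp (A x) = A x" unfolding pp_def by (rule AGA)
lemma pG: "pp (G x) = G x" unfolding pp_def AG[of "G x"] by (rule GAG)
lemma Gp: "G (pp x) = G x" unfolding pp_def by (rule GAG)
lemma ppp: "pp (pp x) = pp x" unfolding pp_def GAG ..

definition "Md = Mop A (\<lambda>_. 1) Suc"
definition "Mn = Mop pp (\<lambda>_. 1) id"
definition "Ml = Mop G of_nat (\<lambda>k. k - 1)"
definition "Mw = Mop (\<lambda>x. x) (\<lambda>k. of_nat (Suc k)) (\<lambda>k. k)"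

abbreviation "DD \<equiv> Der Md"
abbreviation "NN \<equiv> Der Mn"
abbreviation "LL \<equiv> Der Ml"
abbreviation "WW \<equiv> Der Mw"

lemma R1: "LL (DD P) = DD (LL P) + NN P"
proof -
  have C: "Der Ml (Md v) - Der Md (Ml v) = Mn v" for v
  proof (cases v)
    case (Pair i k)
    have e1: "Der Ml (Md (i, k)) = sg 0 (of_nat (Suc k)) * loopv (A (G (basisv i))) k"
      by (simp add: Md_def Ml_def Der_Mop_Mop[OF linG] AG)
    have e2: "Der Md (Ml (i, k)) = sg 0 (of_nat k) * loopv (A (G (basisv i))) k"
      by (cases k) (simp_all add: Md_def Ml_def Der_Mop_Mop[OF linA])
    have "Der Ml (Md (i, k)) - Der Md (Ml (i, k)) = sg 0 (of_nat (Suc k) - of_nat k) * loopv (A (G (basisv i))) k"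
      unfolding e1 e2 by (rule smult_diff_left[symmetric])
    also have "\<dots> = Mn (i, k)" by (simp add: Mn_def Mop_def pp_def)
    finally show ?thesis using Pair by simp
  qed
  have "Der (\<lambda>v. Der Ml (Md v) - Der Md (Ml v)) P = Der Mn P" by (rule Der_cong) (rule C)
  then show ?thesis using Der_comm[of Ml Md P] by simp
qed

lemma R2: "NN (DD P) = DD (NN P)"
proof -
  have C: "Der Mn (Md v) - Der Md (Mn v) = 0" for v
    by (cases v) (simp add: Md_def Mn_def Der_Mop_Mop[OF linA] Der_Mop_Mop[OF linp] pA Ap)
  have "Der (\<lambda>v. Der Mn (Md v) - Der Md (Mn v)) P = Der (\<lambda>v. 0) P" by (rule Der_cong) (rule C)
  then show ?thesis using Der_comm[of Mn Md P] Der_zero_fun by simp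
qed

lemma R3: "NN (LL P) = LL (NN P)"
proof -
  have C: "Der Mn (Ml v) - Der Ml (Mn v) = 0" for v
    by (cases v) (simp add: Ml_def Mn_def Der_Mop_Mop[OF linG] Der_Mop_Mop[OF linp] pG Gp)
  have "Der (\<lambda>v. Der Mn (Ml v) - Der Ml (Mn v)) P = Der (\<lambda>v. 0) P" by (rule Der_cong) (rule C)
  then show ?thesis using Der_comm[of Mn Ml P] Der_zero_fun by simp
qed

lemma R4: "WW (LL P) = LL (WW P) - LL P"
proof -
  have C: "Der Mw (Ml v) - Der Ml (Mw v) = - Ml v" for v
  proof (cases v)
    case (Pair i k)
    show ?thesis
    proof (cases k)
      case 0 then show ?thesis using Pair
        by (simp add: Ml_def Mw_def Mop_def Der_smult Der_Mop_loopv[OF linG])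
    next
      case (Suc j)
      have "Der Mw (Ml (i, k)) - Der Ml (Mw (i, k))
          = sg 0 (of_nat k * of_nat k - of_nat (Suc k) * of_nat k) * loopv (G (basisv i)) j"
        using Suc by (simp add: Ml_def Mw_def Der_Mop_Mop[OF linG] Der_Mop_Mop[OF lin_id] smult_diff_left)
      also have "of_nat k * of_nat k - of_nat (Suc k) * of_nat k = - (of_nat k :: complex)"
        by (simp add: algebra_simps)
      finally have c1: "Der Mw (Ml (i, k)) - Der Ml (Mw (i, k)) = sg 0 (- of_nat k) * loopv (G (basisv i)) j" .
      have c2: "Ml (i, k) = sg 0 (of_nat k) * loopv (G (basisv i)) j" using Suc by (simp add: Ml_def Mop_def)
      show ?thesis unfolding Pair by (subst c1) (simp only: c2 single_uminus mult_minus_left)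
    qed
  qed
  have "Der (\<lambda>v. Der Mw (Ml v) - Der Ml (Mw v)) P = Der (\<lambda>v. - Ml v) P" by (rule Der_cong) (rule C)
  then show ?thesis using Der_comm[of Mw Ml P] Der_minus_fun[of Ml P] by simp
qed

lemma DD_loopv: "DD (loopv x k) = loopv (A x) (Suc k)"
  by (simp add: Md_def Der_Mop_loopv[OF linA])

lemma NN_loopv: "NN (loopv x k) = loopv (pp x) k"
  by (simp add: Mn_def Der_Mop_loopv[OF linp])

lemma Sh_sub: "P \<in> Sh H \<Longrightarrow> DD P = 0"
proof (induct rule: Sh.induct)
  case (const c) then show ?case by simp
next
  case (gen x k) then show ?case using Hker by (simp add: DD_loopv)
next
  case (add P Q) then show ?case by (simp add: Der_add)
next
  case (mult P Q) then show ?case by (simp add: Der_mult)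
qed

lemma eigdec_W_var: "eigdec Mw UNIV (pvar v)"
proof -
  obtain i k where v: "v = (i, k)" by (cases v)
  have "eig Mw (of_nat (Suc k)) (pvar v)"
    by (simp add: v eig_def Mw_def Mop_def loopv_basis)
  then show "eigdec Mw UNIV (pvar v)"
    by (intro eigdecI[where m="Suc k" and f="\<lambda>d. if d = Suc k then pvar v else 0"]) auto
qed

lemma eigdec_W: "eigdec Mw UNIV P"
  by (rule eigdec_all) (auto simp: eigdec_W_var)

lemma eigdec_N: "eigdec Mn (Sh H) P"
proof (rule eigdec_all)
  fix v :: "'n \<times> nat"
  obtain i k where v: "v = (i, k)" by (cases v)
  define b where "b = basisv i"
  have dec: "pvar v = loopv (b - pp b) k + loopv (pp b) k"
    by (simp add: v b_def loopv_basis[symmetric] loopv_diff)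
  have e0: "eig Mn 0 (loopv (b - pp b) k)"
    by (simp add: eig_def NN_loopv lin_diff[OF linp] ppp)
  have e1: "eig Mn 1 (loopv (pp b) k)"
    by (simp add: eig_def NN_loopv ppp)
  have "b - pp b \<in> H" using Hker by (simp add: lin_diff[OF linA] Ap)
  then have inSh: "loopv (b - pp b) k \<in> Sh H" by (rule Sh.gen)
  show "eigdec Mn (Sh H) (pvar v)"
    by (rule eigdecI[where m=1 and f="\<lambda>d. if d = 0 then loopv (b - pp b) k else if d = 1 then loopv (pp b) k else 0"])
      (use dec e0 e1 inSh in \<open>auto simp: One_nat_def atMost_Suc\<close>)
qed (auto intro: Sh.intros)

lemma W_neg: assumes "WW R = - R" shows "R = 0"
proof -
  obtain f m where f: "R = (\<Sum>d\<le>m. f d)" "\<forall>d. eig Mw (of_nat d) (f d)"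
    using eigdec_W[of R] by (auto simp: eigdec_def)
  have WR: "WW R = (\<Sum>d\<le>m. sg 0 (of_nat d) * f d)" using f by (simp add: Der_sum eig_def)
  have "(\<Sum>d\<le>m. sg 0 (of_nat (Suc d)) * f d) = (\<Sum>d\<le>m. f d + sg 0 (of_nat d) * f d)"
    by (intro sum.cong refl) (simp add: smult_add_left)
  also have "\<dots> = R + WW R" using f(1) WR by (simp add: sum.distrib)
  also have "\<dots> = 0" using assms by simp
  finally have "(\<Sum>d\<le>m. sg 0 (of_nat (Suc d)) * f d) = 0" .
  moreover have "eig Mw (of_nat d) (sg 0 (of_nat (Suc d)) * f d)" for d
    using f(2) by (simp add: eig_smult)
  ultimately have "\<forall>d\<le>m. sg 0 (of_nat (Suc d)) * f d = 0"
    using eigdec_indep[where m=m and g="\<lambda>d. sg 0 (of_nat (Suc d)) * f d" and M=Mw] by blast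
  then have "\<forall>d\<le>m. f d = 0" using smult_eq_0 by (metis of_nat_eq_0_iff nat.distinct(1))
  then show ?thesis using f(1) by simp
qed

lemma smult_neg1: "sg 0 (-1) * P = - (P :: 'n Spoly)"
  by (simp add: single_uminus)

lemma L_eig: assumes "eig Mw (of_nat w) Q" shows "eig Mw (of_nat w - 1) (LL Q)"
proof -
  have "WW (LL Q) = LL (sg 0 (of_nat w) * Q) - LL Q" using R4[of Q] assms by (simp add: eig_def)
  also have "\<dots> = sg 0 (of_nat w - 1) * LL Q" by (simp add: Der_smult smult_diff_left)
  finally show ?thesis by (simp add: eig_def)
qed

lemma L_nil_eig: "eig Mw (of_nat w) Q \<Longrightarrow> (LL ^^ Suc w) Q = 0"
proof (induct w arbitrary: Q)
  case 0
  have "eig Mw (-1) (LL Q)" using L_eig[OF 0] by simp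
  then have "LL Q = 0" using W_neg by (simp add: eig_def smult_neg1)
  then show ?case by simp
next
  case (Suc w)
  have "eig Mw (of_nat w) (LL Q)" using L_eig[OF Suc(2)] by simp
  then have "(LL ^^ Suc w) (LL Q) = 0" by (rule Suc(1))
  then show ?case by (metis funpow_Suc_right comp_apply)
qed

lemma L_nil: "\<exists>K. (LL ^^ K) P = 0"
proof -
  obtain f m where f: "P = (\<Sum>d\<le>m. f d)" "\<forall>d. eig Mw (of_nat d) (f d)"
    using eigdec_W[of P] by (auto simp: eigdec_def)
  have "(LL ^^ Suc m) (f d) = 0" if "d \<le> m" for d
  proof -
    have "(LL ^^ Suc m) (f d) = (LL ^^ (m - d)) ((LL ^^ Suc d) (f d))"
      using that by (metis Suc_diff_le diff_Suc_Suc funpow_add comp_apply le_add_diff_inverse2 add_Suc_right)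
    also have "(LL ^^ Suc d) (f d) = 0" using L_nil_eig f(2) by blast
    finally show ?thesis by (simp add: Der_pow_zero)
  qed
  have "(LL ^^ Suc m) P = (\<Sum>d\<le>m. (LL ^^ Suc m) (f d))" by (simp only: f(1) Der_pow_sum)
  then have "(LL ^^ Suc m) P = 0" using \<open>\<And>d. d \<le> m \<Longrightarrow> (LL ^^ Suc m) (f d) = 0\<close> by simp
  then show ?thesis by blast
qed

lemma kill:
  assumes D0: "DD Q = 0" and eN: "eig Mn (of_nat d) Q" and d: "d \<noteq> 0"
  shows "Q = 0"
proof -
  have eNj: "eig Mn (of_nat d) ((LL ^^ j) Q)" for j
  proof (induct j)
    case 0 then show ?case using eN by simp
  next
    case (Suc j) then show ?case using R3[of "(LL ^^ j) Q"] by (simp add: eig_def Der_smult)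
  qed
  have key: "DD ((LL ^^ Suc j) Q) = - (sg 0 (of_nat (Suc j) * of_nat d) * (LL ^^ j) Q)" for j
  proof (induct j)
    case 0
    have "LL (DD Q) = DD (LL Q) + NN Q" by (rule R1)
    then show ?case using D0 eN by (simp add: eig_def eq_neg_iff_add_eq_0 add.commute)
  next
    case (Suc j)
    define X where "X = (LL ^^ Suc j) Q"
    have "LL (DD X) = DD (LL X) + NN X" by (rule R1)
    then have "DD (LL X) = LL (DD X) - NN X" by (simp add: algebra_simps)
    also have "LL (DD X) = - (sg 0 (of_nat (Suc j) * of_nat d) * X)"
      using Suc by (simp add: X_def Der_neg Der_smult)
    also have "NN X = sg 0 (of_nat d) * X" using eNj[of "Suc j"] by (simp add: eig_def X_def)
    finally have "DD (LL X) = - (sg 0 (of_nat (Suc j) * of_nat d) * X) - sg 0 (of_nat d) * X" .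
    also have "\<dots> = - (sg 0 (of_nat (Suc (Suc j)) * of_nat d) * X)"
    proof -
      have eq: "sg 0 (of_nat (Suc (Suc j)) * of_nat d) * X = sg 0 (of_nat (Suc j) * of_nat d) * X + sg 0 (of_nat d) * X"
        by (subst smult_add_left[symmetric]) (simp add: algebra_simps)
      show ?thesis by (subst eq) simp
    qed
    finally show ?case by (simp add: X_def)
  qed
  have step: "(LL ^^ Suc j) Q = 0 \<Longrightarrow> (LL ^^ j) Q = 0" for j
  proof -
    assume "(LL ^^ Suc j) Q = 0"
    then have "sg 0 (of_nat (Suc j) * of_nat d) * (LL ^^ j) Q = 0" using key[of j] by simp
    then show "(LL ^^ j) Q = 0" using smult_eq_0 d by (metis mult_eq_0_iff of_nat_eq_0_iff nat.distinct(1))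
  qed
  obtain K where "(LL ^^ K) Q = 0" using L_nil by blast
  then have "(LL ^^ 0) Q = 0"
  proof (induct K)
    case 0 then show ?case by simp
  next
    case (Suc K) then show ?case using step by blast
  qed
  then show ?thesis by simp
qed

theorem kernel_eq: "{P. DD P = 0} = Sh H"
proof (intro set_eqI iffI)
  fix P assume "P \<in> Sh H" then show "P \<in> {P. DD P = 0}" using Sh_sub by blast
next
  fix P assume "P \<in> {P. DD P = 0}"
  then have D0: "DD P = 0" by simp
  obtain f m where f: "P = (\<Sum>d\<le>m. f d)" "\<forall>d. eig Mn (of_nat d) (f d)" "f 0 \<in> Sh H"
    using eigdec_N[of P] by (auto simp: eigdec_def)
  have "(\<Sum>d\<le>m. DD (f d)) = 0" using D0 f(1) by (simp add: Der_sum)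
  moreover have "eig Mn (of_nat d) (DD (f d))" for d
    using R2[of "f d"] f(2) by (simp add: eig_def Der_smult)
  ultimately have Dz: "\<forall>d\<le>m. DD (f d) = 0" using eigdec_indep[where m=m and g="\<lambda>d. DD (f d)" and M=Mn] by blast
  have "\<forall>d\<le>m. d \<noteq> 0 \<longrightarrow> f d = 0" using kill Dz f(2) by blast
  then have "P = f 0" using f(1) by (simp add: sum.atMost_shift[symmetric] atMost_atLeast0 sum.atLeast_Suc_atMost)
  then show "P \<in> Sh H" using f(3) by simp
qed

end




lemma pderiv_pvar: "pderiv_var a (pvar v) = (if a = v then 1 else 0)"
  by (auto simp: pderiv_single lookup_single when_def)

lemma pderiv_smult: "pderiv_var a (sg 0 c * P) = sg 0 c * pderiv_var a P"
  by (simp add: pderiv_mult)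

lemma pderiv_loopv0: "pderiv_var (j, k) (loopv x 0) = (if k = 0 then sg 0 (x j) else 0)"
proof -
  have "pderiv_var (j, k) (loopv x 0) = (\<Sum>i\<in>UNIV. sg 0 (x i) * (if (j, k) = (i, 0) then 1 else 0))"
    by (simp add: loopv_alt pderiv_sum pderiv_smult pderiv_pvar)
  also have "\<dots> = (\<Sum>i\<in>UNIV. if i = j \<and> k = 0 then sg 0 (x j) else 0)"
    by (intro sum.cong) auto
  also have "\<dots> = (if k = 0 then sg 0 (x j) else 0)"
    by (cases "k = 0") (simp_all add: sum.delta)
  finally show ?thesis .
qed

lemma poisson_eq:
  fixes br :: "('n::finite \<Rightarrow> complex) \<Rightarrow> ('n \<Rightarrow> complex) \<Rightarrow> ('n \<Rightarrow> complex)"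
  assumes L: "lie_algebra br"
  shows "poisson br (loopv h 0) P = Der (Mop (br h) (\<lambda>_. 1) Suc) P"
proof -
  define u where "u = loopv h 0"
  define F where "F b a = pderiv_var a u * loopv (br (basisv (fst a)) (basisv (fst b))) (snd a + snd b + 1)" for a b :: "'n \<times> nat"
  define R where "R = (\<lambda>i. (i, 0::nat)) ` (UNIV :: 'n set)"
  have inner: "(\<Sum>a\<in>vars u. F b a) = Mop (br h) (\<lambda>_. 1) Suc b" for b
  proof -
    have fR: "finite R" by (simp add: R_def)
    have "(\<Sum>a\<in>vars u. F b a) = (\<Sum>a\<in>vars u \<union> R. F b a)"
      by (rule sum.mono_neutral_left) (auto simp: vars_finite fR F_def pderiv_notvar)
    also have "\<dots> = (\<Sum>a\<in>R. F b a)"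
    proof (rule sum.mono_neutral_right)
      show "finite (vars u \<union> R)" by (simp add: vars_finite fR)
      show "R \<subseteq> vars u \<union> R" by blast
      show "\<forall>a\<in>vars u \<union> R - R. F b a = 0"
      proof
        fix a assume "a \<in> vars u \<union> R - R"
        then obtain j k where a: "a = (j, k)" "k \<noteq> 0" by (cases a) (auto simp: R_def)
        then show "F b a = 0" by (simp add: F_def u_def pderiv_loopv0)
      qed
    qed
    also have "\<dots> = (\<Sum>i\<in>UNIV. sg 0 (h i) * loopv (br (basisv i) (basisv (fst b))) (snd b + 1))"
      unfolding R_def by (subst sum.reindex) (auto simp: inj_on_def F_def u_def pderiv_loopv0)
    also have "\<dots> = loopv (\<Sum>i\<in>UNIV. cscale (h i) (br (basisv i) (basisv (fst b)))) (snd b + 1)"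
      by (simp add: loopv_sum loopv_smult)
    also have "(\<Sum>i\<in>UNIV. cscale (h i) (br (basisv i) (basisv (fst b)))) = br h (basisv (fst b))"
      using lin_expand[OF lie_lin_left[OF L, of "basisv (fst b)"], of h] by simp
    finally show ?thesis by (simp add: Mop_def Suc_eq_plus1)
  qed
  have "poisson br u P = (\<Sum>b\<in>vars P. \<Sum>a\<in>vars u. pderiv_var b P * F b a)"
    unfolding poisson_def F_def by (subst sum.swap) (simp add: algebra_simps)
  also have "\<dots> = (\<Sum>b\<in>vars P. pderiv_var b P * Mop (br h) (\<lambda>_. 1) Suc b)"
    by (simp add: sum_distrib_left[symmetric] inner)
  finally show ?thesis by (simp add: Der_def u_def)
qed

theorem lemma4:
  fixes br :: "('n::finite \<Rightarrow> complex) \<Rightarrow> ('n \<Rightarrow> complex) \<Rightarrow> ('n \<Rightarrow> complex)"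
    and H :: "('n \<Rightarrow> complex) set"
    and e h f :: "'n \<Rightarrow> complex"
  assumes "semisimple br"
    and "cartan_subalgebra br H"
    and "principal_sl2_triple br H e h f"
    and "h \<in> H"
  shows "poisson_centralizer br (loopv h 0) = Sh H"
proof -
  have L: "lie_algebra br" using assms(1) by (simp add: semisimple_def)
  obtain G where linA: "lin (br h)" and ker: "{x. br h x = 0} = H" and linG: "lin G"
    and AG: "\<And>x. br h (G x) = G (br h x)" and AGA: "\<And>x. br h (G (br h x)) = br h x"
    and GAG: "\<And>x. G (br h (G x)) = G x"
    using LA_main[OF assms] by blast
  interpret k: kd "br h" G H
    by unfold_locales (use linA linG AG AGA GAG ker in auto)
  have "poisson_centralizer br (loopv h 0) = {P. k.DD P = 0}"
    by (simp add: poisson_centralizer_def poisson_eq[OF L] k.Md_def)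
  also have "\<dots> = Sh H" by (rule k.kernel_eq)
  finally show ?thesis .
qed


end
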